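(* If the rows of ${\bf q}$ are pairwise distinct, then $\mathrm{Aut}_{\rm gr}(\mathcal{O}_{\bf q}(k^{n}))\cong(k^* )^n\rtimes\mathcal P_{\bf q}$.
   Context: Let $k$ be a field, $k^*=k\setminus\{0\}$, $n\ge1$, and ${\bf q}=(q_{ij})\in\mathcal M_n(k)$ with $q_{ij}q_{ji}=1$, $q_{ii}=1$ for all $i,j$. The quantum affine space is $\mathcal{O}_{\bf q}(k^{n})=k\langle x_1,\dots,x_n\rangle/\langle x_jx_i-q_{ij}x_ix_j,\ 1\le i,j\le n\rangle$, $\mathbb N$-graded with $\deg x_i=1$; $\mathrm{Aut}_{\rm gr}$ denotes its group of graded algebra automorphisms. $\mathcal P_{\bf q}=\{\pi\in S_n: q_{\pi(i)\pi(j)}=q_{ij}\ \forall\,1\le i,j\le n\}$, acting on $(k^* )^n$ (the diagonal automorphisms $x_i\mapsto\lambda_ix_i$) by permuting coordinates. *)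

theory Defs
  imports "HOL-Algebra.QuotRing" "HOL-Algebra.Ideal" "HOL-Combinatorics.Permutations"
begin

section \<open>Free algebra k<x_0,...,x_(n-1)> as finitely supported functions on words\<close>

definition fa_carrier :: "nat \<Rightarrow> (nat list \<Rightarrow> 'k::field) set" where
  "fa_carrier n = {f. finite {w. f w \<noteq> 0} \<and> (\<forall>w. f w \<noteq> 0 \<longrightarrow> set w \<subseteq> {..<n})}"

definition fa_mult :: "(nat list \<Rightarrow> 'k::field) \<Rightarrow> (nat list \<Rightarrow> 'k) \<Rightarrow> nat list \<Rightarrow> 'k" where
  "fa_mult f g w = (\<Sum>i\<le>length w. f (take i w) * g (drop i w))"

definition fa_const :: "'k::field \<Rightarrow> nat list \<Rightarrow> 'k" where
  "fa_const c w = (if w = [] then c else 0)"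

definition FA :: "nat \<Rightarrow> (nat list \<Rightarrow> 'k::field) ring" where
  "FA n = \<lparr>carrier = fa_carrier n, monoid.mult = fa_mult, one = fa_const 1,
           zero = (\<lambda>_. 0), add = (\<lambda>f g w. f w + g w)\<rparr>"

definition fa_var :: "nat \<Rightarrow> nat list \<Rightarrow> 'k::field" where
  "fa_var i w = (if w = [i] then 1 else 0)"

definition qrel :: "(nat \<Rightarrow> nat \<Rightarrow> 'k::field) \<Rightarrow> nat \<Rightarrow> nat \<Rightarrow> nat list \<Rightarrow> 'k" where
  "qrel q i j w = fa_mult (fa_var j) (fa_var i) w - q i j * fa_mult (fa_var i) (fa_var j) w"

definition qrels :: "nat \<Rightarrow> (nat \<Rightarrow> nat \<Rightarrow> 'k::field) \<Rightarrow> (nat list \<Rightarrow> 'k) set" where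
  "qrels n q = {qrel q i j | i j. i < n \<and> j < n}"

definition qideal :: "nat \<Rightarrow> (nat \<Rightarrow> nat \<Rightarrow> 'k::field) \<Rightarrow> (nat list \<Rightarrow> 'k) set" where
  "qideal n q = genideal (FA n) (qrels n q)"

definition Oq :: "nat \<Rightarrow> (nat \<Rightarrow> nat \<Rightarrow> 'k::field) \<Rightarrow> (nat list \<Rightarrow> 'k) set ring" where
  "Oq n q = FA n Quot qideal n q"

definition Oq_scalar :: "nat \<Rightarrow> (nat \<Rightarrow> nat \<Rightarrow> 'k::field) \<Rightarrow> 'k \<Rightarrow> (nat list \<Rightarrow> 'k) set" where
  "Oq_scalar n q c = qideal n q +>\<^bsub>FA n\<^esub> fa_const c"

definition Oq_hom :: "nat \<Rightarrow> (nat \<Rightarrow> nat \<Rightarrow> 'k::field) \<Rightarrow> nat \<Rightarrow> (nat list \<Rightarrow> 'k) set set" where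
  "Oq_hom n q d = {qideal n q +>\<^bsub>FA n\<^esub> f | f. f \<in> carrier (FA n) \<and> (\<forall>w. f w \<noteq> 0 \<longrightarrow> length w = d)}"

definition Aut_gr_set :: "nat \<Rightarrow> (nat \<Rightarrow> nat \<Rightarrow> 'k::field) \<Rightarrow> ((nat list \<Rightarrow> 'k) set \<Rightarrow> (nat list \<Rightarrow> 'k) set) set" where
  "Aut_gr_set n q = {\<phi>. \<phi> \<in> ring_iso (Oq n q) (Oq n q)
      \<and> \<phi> \<in> extensional (carrier (Oq n q))
      \<and> (\<forall>c a. a \<in> carrier (Oq n q) \<longrightarrow>
             \<phi> (Oq_scalar n q c \<otimes>\<^bsub>Oq n q\<^esub> a) = Oq_scalar n q c \<otimes>\<^bsub>Oq n q\<^esub> \<phi> a)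
      \<and> (\<forall>d. \<phi> ` Oq_hom n q d \<subseteq> Oq_hom n q d)}"

definition Aut_gr :: "nat \<Rightarrow> (nat \<Rightarrow> nat \<Rightarrow> 'k::field) \<Rightarrow> ((nat list \<Rightarrow> 'k) set \<Rightarrow> (nat list \<Rightarrow> 'k) set) monoid" where
  "Aut_gr n q = \<lparr>carrier = Aut_gr_set n q,
                 monoid.mult = (\<lambda>\<phi> \<psi>. compose (carrier (Oq n q)) \<phi> \<psi>),
                 one = (\<lambda>x\<in>carrier (Oq n q). x)\<rparr>"

definition Pq :: "nat \<Rightarrow> (nat \<Rightarrow> nat \<Rightarrow> 'k) \<Rightarrow> (nat \<Rightarrow> nat) set" where
  "Pq n q = {\<pi>. \<pi> permutes {..<n} \<and> (\<forall>i<n. \<forall>j<n. q (\<pi> i) (\<pi> j) = q i j)}"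

definition perm_act :: "nat \<Rightarrow> (nat \<Rightarrow> nat) \<Rightarrow> (nat \<Rightarrow> 'k) \<Rightarrow> nat \<Rightarrow> 'k" where
  "perm_act n \<pi> l = (\<lambda>i\<in>{..<n}. l (inv_into {..<n} \<pi> i))"

definition semidirect :: "nat \<Rightarrow> (nat \<Rightarrow> nat \<Rightarrow> 'k::field) \<Rightarrow> ((nat \<Rightarrow> 'k) \<times> (nat \<Rightarrow> nat)) monoid" where
  "semidirect n q = \<lparr>carrier = ({..<n} \<rightarrow>\<^sub>E (UNIV - {0})) \<times> Pq n q,
     monoid.mult = (\<lambda>(l, \<pi>) (m, \<sigma>). ((\<lambda>i\<in>{..<n}. l i * perm_act n \<pi> m i), \<pi> \<circ> \<sigma>)),
     one = ((\<lambda>i\<in>{..<n}. 1), id)\<rparr>"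

end

theory Submission
  imports Defs
begin

lemma fa_mult_Nil: "fa_mult f g [] = f [] * g []"
  by (simp add: fa_mult_def)

lemma fa_mult_Cons: "fa_mult f g (a # w) = f [] * g (a # w) + fa_mult (\<lambda>u. f (a # u)) g w"
  unfolding fa_mult_def length_Cons sum.atMost_Suc_shift by simp

lemma fa_mult_ldistr: "fa_mult (\<lambda>w. f w + g w) h w = fa_mult f h w + fa_mult g h w"
  by (simp add: fa_mult_def sum.distrib algebra_simps)

lemma fa_mult_rdistr: "fa_mult h (\<lambda>w. f w + g w) w = fa_mult h f w + fa_mult h g w"
  by (simp add: fa_mult_def sum.distrib algebra_simps)

lemma fa_mult_smult_left: "fa_mult (\<lambda>u. c * f u) h w = c * fa_mult f h w"
  by (simp add: fa_mult_def sum_distrib_left algebra_simps)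

lemma fa_mult_smult_right: "fa_mult h (\<lambda>u. c * f u) w = c * fa_mult h f w"
  by (simp add: fa_mult_def sum_distrib_left algebra_simps)

lemma fa_mult_assoc: "fa_mult (fa_mult f g) h w = fa_mult f (fa_mult g h) w"
proof (induction w arbitrary: f)
  case Nil thus ?case by (simp add: fa_mult_Nil)
next
  case (Cons a w)
  have "fa_mult (\<lambda>u. fa_mult f g (a # u)) h w
      = fa_mult (\<lambda>u. f [] * g (a # u) + fa_mult (\<lambda>u. f (a # u)) g u) h w"
    by (simp add: fa_mult_Cons)
  also have "\<dots> = f [] * fa_mult (\<lambda>u. g (a # u)) h w + fa_mult (fa_mult (\<lambda>u. f (a # u)) g) h w"
    by (simp only: fa_mult_ldistr fa_mult_smult_left)
  finally have e1: "fa_mult (\<lambda>u. fa_mult f g (a # u)) h w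
      = f [] * fa_mult (\<lambda>u. g (a # u)) h w + fa_mult (fa_mult (\<lambda>u. f (a # u)) g) h w" .
  have "fa_mult (fa_mult f g) h (a # w) = fa_mult f g [] * h (a # w) + fa_mult (\<lambda>u. fa_mult f g (a # u)) h w"
    by (rule fa_mult_Cons)
  also have "\<dots> = f [] * g [] * h (a # w) + f [] * fa_mult (\<lambda>u. g (a # u)) h w + fa_mult f (fa_mult g h) (a # w) - f [] * fa_mult g h (a # w)"
    unfolding e1 Cons.IH by (simp add: fa_mult_Nil fa_mult_Cons)
  also have "\<dots> = fa_mult f (fa_mult g h) (a # w)"
    by (simp add: fa_mult_Nil fa_mult_Cons algebra_simps)
  finally show ?case .
qed

lemma fa_mult_one_left: "fa_mult (fa_const 1) f w = f w"
proof -
  have "fa_mult (fa_const 1) f w = (\<Sum>i\<le>length w. if i = 0 then f w else 0)"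
    unfolding fa_mult_def by (rule sum.cong) (auto simp: fa_const_def)
  thus ?thesis by simp
qed

lemma fa_mult_one_right: "fa_mult f (fa_const 1) w = f w"
proof -
  have "fa_mult f (fa_const 1) w = (\<Sum>i\<le>length w. if i = length w then f w else 0)"
    unfolding fa_mult_def by (rule sum.cong) (auto simp: fa_const_def)
  thus ?thesis by simp
qed

lemma fa_mult_nonzero:
  assumes "fa_mult f g w \<noteq> 0"
  shows "\<exists>u v. w = u @ v \<and> f u \<noteq> 0 \<and> g v \<noteq> 0"
proof -
  from assms obtain i where "f (take i w) * g (drop i w) \<noteq> 0"
    unfolding fa_mult_def by (meson sum.neutral)
  thus ?thesis by (intro exI[of _ "take i w"] exI[of _ "drop i w"]) auto
qed

lemma fa_mult_carrier:
  assumes "f \<in> fa_carrier n" "g \<in> fa_carrier n"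
  shows "fa_mult f g \<in> fa_carrier n"
proof -
  have sub: "{w. fa_mult f g w \<noteq> 0} \<subseteq> (\<lambda>(u,v). u @ v) ` ({u. f u \<noteq> 0} \<times> {v. g v \<noteq> 0})"
    using fa_mult_nonzero by fastforce
  have "finite {w. fa_mult f g w \<noteq> 0}"
    by (rule finite_subset[OF sub]) (use assms in \<open>auto simp: fa_carrier_def\<close>)
  moreover have "set w \<subseteq> {..<n}" if "fa_mult f g w \<noteq> 0" for w
    using fa_mult_nonzero[OF that] assms unfolding fa_carrier_def by fastforce
  ultimately show ?thesis unfolding fa_carrier_def by auto
qed

lemma FA_simps:
  "carrier (FA n) = fa_carrier n"
  "monoid.mult (FA n) = fa_mult"
  "one (FA n) = fa_const 1"
  "zero (FA n) = (\<lambda>_. 0)"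
  "add (FA n) = (\<lambda>f g w. f w + g w)"
  by (simp_all add: FA_def)

lemma fa_add_carrier: "f \<in> fa_carrier n \<Longrightarrow> g \<in> fa_carrier n \<Longrightarrow> (\<lambda>w. f w + g w) \<in> fa_carrier n"
proof -
  assume a: "f \<in> fa_carrier n" "g \<in> fa_carrier n"
  have "{w. f w + g w \<noteq> 0} \<subseteq> {w. f w \<noteq> 0} \<union> {w. g w \<noteq> 0}" by auto
  thus ?thesis using a unfolding fa_carrier_def
    by (auto intro: finite_subset)
qed

lemma fa_neg_carrier: "f \<in> fa_carrier n \<Longrightarrow> (\<lambda>w. - f w) \<in> fa_carrier n"
  unfolding fa_carrier_def by auto

lemma fa_zero_carrier: "(\<lambda>_. 0) \<in> fa_carrier n"
  unfolding fa_carrier_def by auto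

lemma fa_const_carrier: "fa_const c \<in> fa_carrier n"
proof -
  have "{w. fa_const c w \<noteq> 0} \<subseteq> {[]}" by (auto simp: fa_const_def)
  thus ?thesis unfolding fa_carrier_def by (auto intro: finite_subset simp: fa_const_def)
qed

lemma ring_FA: "ring (FA n)"
proof (rule ringI)
  show "abelian_group (FA n)"
    by (rule abelian_groupI)
       (auto simp: FA_simps fa_add_carrier fa_zero_carrier algebra_simps
             intro!: bexI[of _ "\<lambda>w. - _ w"] fa_neg_carrier)
  show "monoid (FA n)"
    by (rule monoidI) (auto simp: FA_simps fa_mult_carrier fa_const_carrier
        fa_mult_assoc fa_mult_one_left fa_mult_one_right)
qed (auto simp: FA_simps fa_mult_ldistr fa_mult_rdistr)


lemma fa_carrierI:
  assumes "finite W" "\<And>w. f w \<noteq> 0 \<Longrightarrow> w \<in> W" "\<And>w. w \<in> W \<Longrightarrow> set w \<subseteq> {..<n}"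
  shows "f \<in> fa_carrier n"
proof -
  have "{w. f w \<noteq> 0} \<subseteq> W" using assms(2) by auto
  thus ?thesis using assms unfolding fa_carrier_def by (auto intro: finite_subset)
qed

lemma fa_carrier_zero: "f \<in> fa_carrier n \<Longrightarrow> \<not> set w \<subseteq> {..<n} \<Longrightarrow> f w = 0"
  unfolding fa_carrier_def by auto

lemma fa_var_carrier: "i < n \<Longrightarrow> fa_var i \<in> fa_carrier n"
  by (rule fa_carrierI[where W="{[i]}"]) (auto simp: fa_var_def split: if_splits)

lemma fa_mult_var_left:
  "fa_mult (fa_var a) f w = (case w of [] \<Rightarrow> 0 | b # u \<Rightarrow> if b = a then f u else 0)"
proof (cases w)
  case Nil thus ?thesis by (simp add: fa_mult_Nil fa_var_def)
next
  case (Cons b u)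
  have "fa_mult (\<lambda>v. fa_var a (b # v)) f u = (if b = a then f u else 0)"
  proof (cases "b = a")
    case True
    hence e: "(\<lambda>v. fa_var a (b # v)) = fa_const 1" by (auto simp: fa_var_def fa_const_def)
    show ?thesis using True unfolding e by (simp add: fa_mult_one_left)
  next
    case False
    thus ?thesis by (simp add: fa_mult_def fa_var_def)
  qed
  thus ?thesis using Cons by (simp add: fa_mult_Cons fa_var_def)
qed

lemma fa_mult_var_var: "fa_mult (fa_var a) (fa_var b) w = (if w = [a, b] then 1 else 0)"
  by (auto simp: fa_mult_var_left fa_var_def split: list.splits)

lemma FA_a_inv: "f \<in> fa_carrier n \<Longrightarrow> a_inv (FA n) f = (\<lambda>w. - f w)"
proof -
  assume f: "f \<in> fa_carrier n"
  interpret ring "FA n" by (rule ring_FA)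
  show ?thesis
    by (rule minus_equality) (auto simp: FA_simps f fa_neg_carrier)
qed

lemma FA_minus: "f \<in> fa_carrier n \<Longrightarrow> g \<in> fa_carrier n \<Longrightarrow> a_minus (FA n) f g = (\<lambda>w. f w - g w)"
  by (simp add: a_minus_def FA_a_inv FA_simps)

definition single :: "nat list \<Rightarrow> 'k::field \<Rightarrow> nat list \<Rightarrow> 'k" where
  "single w c = (\<lambda>u. if u = w then c else 0)"

lemma single_carrier: "set w \<subseteq> {..<n} \<Longrightarrow> single w c \<in> fa_carrier n"
  by (rule fa_carrierI[where W="{w}"]) (auto simp: single_def split: if_splits)

definition hq :: "(nat \<Rightarrow> nat \<Rightarrow> 'k::field) \<Rightarrow> nat \<Rightarrow> nat \<Rightarrow> 'k" where
  "hq q a b = (if b < a then q b a else 1)"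

fun wt :: "(nat \<Rightarrow> nat \<Rightarrow> 'k::field) \<Rightarrow> nat list \<Rightarrow> 'k" where
  "wt q [] = 1"
| "wt q (a # w) = prod_list (map (hq q a) w) * wt q w"

definition crossM :: "(nat \<Rightarrow> nat \<Rightarrow> 'k::field) \<Rightarrow> nat multiset \<Rightarrow> nat multiset \<Rightarrow> 'k" where
  "crossM q A B = prod_mset (image_mset (\<lambda>a. prod_mset (image_mset (hq q a) B)) A)"

lemma prod_list_map_mset: "prod_list (map f w) = prod_mset (image_mset f (mset w))"
  by (induct w) auto

lemma wt_append: "wt q (u @ v) = wt q u * wt q v * crossM q (mset u) (mset v)"
  by (induct u) (auto simp: crossM_def prod_list_map_mset algebra_simps)

definition Wd :: "nat multiset \<Rightarrow> nat list set" where
  "Wd M = {w. mset w = M}"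

lemma finite_Wd: "finite (Wd M)"
proof -
  have "Wd M \<subseteq> {w. set w \<subseteq> set_mset M \<and> length w = size M}"
    unfolding Wd_def by auto
  thus ?thesis by (rule finite_subset) (simp add: finite_lists_length_eq)
qed

definition NM :: "(nat \<Rightarrow> nat \<Rightarrow> 'k::field) \<Rightarrow> nat multiset \<Rightarrow> (nat list \<Rightarrow> 'k) \<Rightarrow> 'k" where
  "NM q M f = (\<Sum>w\<in>Wd M. f w * wt q w)"

definition Ud :: "nat multiset \<Rightarrow> nat list set" where
  "Ud M = {w. mset w \<subseteq># M}"

lemma finite_Ud: "finite (Ud M)"
proof -
  have "Ud M \<subseteq> {w. set w \<subseteq> set_mset M \<and> length w \<le> size M}"
    unfolding Ud_def by (auto dest: mset_subset_eqD) (metis size_mset size_mset_mono)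
  thus ?thesis by (rule finite_subset) (simp add: finite_lists_length_le)
qed

lemma take_drop_mset:
  "mset (take i w) \<subseteq># mset w" "mset (drop i w) = mset w - mset (take i w)"
  "mset w - (mset w - mset (take i w)) = mset (take i w)"
proof -
  have "mset w = mset (take i w) + mset (drop i w)"
    by (metis append_take_drop_id mset_append)
  thus "mset (take i w) \<subseteq># mset w" "mset (drop i w) = mset w - mset (take i w)"
    "mset w - (mset w - mset (take i w)) = mset (take i w)" by simp_all
qed

lemma split_sum:
  "(\<Sum>w\<in>Wd M. \<Sum>i\<le>length w. F (take i w) (drop i w))
   = (\<Sum>u\<in>Ud M. \<Sum>v\<in>Wd (M - mset u). F u v)"
proof -
  have "(\<Sum>w\<in>Wd M. \<Sum>i\<le>length w. F (take i w) (drop i w))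
      = (\<Sum>(w,i)\<in>Sigma (Wd M) (\<lambda>w. {..length w}). F (take i w) (drop i w))"
    by (rule sum.Sigma) (auto simp: finite_Wd)
  also have "\<dots> = (\<Sum>(u,v)\<in>Sigma (Ud M) (\<lambda>u. Wd (M - mset u)). F u v)"
    by (rule sum.reindex_bij_witness[where j="\<lambda>(w,i). (take i w, drop i w)" and i="\<lambda>(u,v). (u @ v, length u)"])
       (auto simp: Wd_def Ud_def take_drop_mset)
  also have "\<dots> = (\<Sum>u\<in>Ud M. \<Sum>v\<in>Wd (M - mset u). F u v)"
    by (rule sum.Sigma[symmetric]) (auto simp: finite_Ud finite_Wd)
  finally show ?thesis .
qed

lemma split_sum':
  "(\<Sum>w\<in>Wd M. \<Sum>i\<le>length w. F (take i w) (drop i w))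
   = (\<Sum>v\<in>Ud M. \<Sum>u\<in>Wd (M - mset v). F u v)"
proof -
  have "(\<Sum>w\<in>Wd M. \<Sum>i\<le>length w. F (take i w) (drop i w))
      = (\<Sum>(w,i)\<in>Sigma (Wd M) (\<lambda>w. {..length w}). F (take i w) (drop i w))"
    by (rule sum.Sigma) (auto simp: finite_Wd)
  also have "\<dots> = (\<Sum>(v,u)\<in>Sigma (Ud M) (\<lambda>v. Wd (M - mset v)). F u v)"
    by (rule sum.reindex_bij_witness[where j="\<lambda>(w,i). (drop i w, take i w)" and i="\<lambda>(v,u). (u @ v, length u)"])
       (auto simp: Wd_def Ud_def take_drop_mset)
  also have "\<dots> = (\<Sum>v\<in>Ud M. \<Sum>u\<in>Wd (M - mset v). F u v)"
    by (rule sum.Sigma[symmetric]) (auto simp: finite_Ud finite_Wd)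
  finally show ?thesis .
qed

lemma NM_mult_left:
  assumes "\<And>M. NM q M f = 0"
  shows "NM q M (fa_mult g f) = 0"
proof -
  have "NM q M (fa_mult g f) = (\<Sum>w\<in>Wd M. \<Sum>i\<le>length w. g (take i w) * f (drop i w) * wt q (take i w @ drop i w))"
    unfolding NM_def fa_mult_def by (simp add: sum_distrib_right)
  also have "\<dots> = (\<Sum>u\<in>Ud M. \<Sum>v\<in>Wd (M - mset u). g u * f v * wt q (u @ v))"
    by (rule split_sum)
  also have "\<dots> = (\<Sum>u\<in>Ud M. g u * wt q u * crossM q (mset u) (M - mset u) * NM q (M - mset u) f)"
    unfolding NM_def
    by (rule sum.cong[OF refl], simp add: sum_distrib_left wt_append, rule sum.cong)
       (auto simp: Wd_def algebra_simps)
  also have "\<dots> = 0" by (simp add: assms)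
  finally show ?thesis .
qed

lemma NM_mult_right:
  assumes "\<And>M. NM q M f = 0"
  shows "NM q M (fa_mult f g) = 0"
proof -
  have "NM q M (fa_mult f g) = (\<Sum>w\<in>Wd M. \<Sum>i\<le>length w. f (take i w) * g (drop i w) * wt q (take i w @ drop i w))"
    unfolding NM_def fa_mult_def by (simp add: sum_distrib_right)
  also have "\<dots> = (\<Sum>v\<in>Ud M. \<Sum>u\<in>Wd (M - mset v). f u * g v * wt q (u @ v))"
    by (rule split_sum')
  also have "\<dots> = (\<Sum>v\<in>Ud M. g v * wt q v * NM q (M - mset v) (\<lambda>u. f u * crossM q (mset u) (mset v)))"
    unfolding NM_def
    by (rule sum.cong[OF refl], simp add: sum_distrib_left wt_append, rule sum.cong)
       (auto simp: Wd_def algebra_simps)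
  also have "\<dots> = (\<Sum>v\<in>Ud M. g v * wt q v * crossM q (M - mset v) (mset v) * NM q (M - mset v) f)"
    unfolding NM_def
    by (rule sum.cong[OF refl], simp add: sum_distrib_left, rule sum.cong)
       (auto simp: Wd_def algebra_simps)
  also have "\<dots> = 0" by (simp add: assms)
  finally show ?thesis .
qed


lemma NM_add: "NM q M (\<lambda>w. f w + g w) = NM q M f + NM q M g"
  by (simp add: NM_def sum.distrib algebra_simps)
lemma NM_neg: "NM q M (\<lambda>w. - f w) = - NM q M f"
  by (simp add: NM_def sum_negf)
lemma NM_diff: "NM q M (\<lambda>w. f w - g w) = NM q M f - NM q M g"
  by (simp add: NM_def sum_subtractf algebra_simps)
lemma NM_zero: "NM q M (\<lambda>w. 0) = 0"
  by (simp add: NM_def)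
lemma NM_smult: "NM q M (\<lambda>w. c * f w) = c * NM q M f"
  by (simp add: NM_def sum_distrib_left algebra_simps)
lemma NM_single: "NM q M (single w c) = (if mset w = M then c * wt q w else 0)"
proof -
  have "NM q M (single w c) = (\<Sum>u\<in>Wd M. if u = w then c * wt q w else 0)"
    unfolding NM_def single_def by (rule sum.cong) auto
  also have "\<dots> = (if mset w = M then c * wt q w else 0)"
    by (subst sum.delta[OF finite_Wd]) (simp add: Wd_def)
  finally show ?thesis .
qed

lemma Wd_single: "Wd {#a#} = {[a]}"
  by (auto simp: Wd_def)

lemma NM_one: "NM q {#a#} f = f [a]"
  by (simp add: NM_def Wd_single)

lemma Wd_two: "Wd {#a, b#} = {[a,b],[b,a]}"
proof -
  have "w = [a,b] \<or> w = [b,a]" if "mset w = {#a, b#}" for w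
  proof -
    have "length w = size (mset w)" by simp
    also have "\<dots> = 2" using that by simp
    finally have "length w = 2" .
    then obtain x y where w: "w = [x,y]"
      by (auto simp: numeral_2_eq_2 length_Suc_conv)
    with that have "{#x, y#} = {#a, b#}" by simp
    thus ?thesis using w by (auto simp: add_eq_conv_ex)
  qed
  thus ?thesis by (auto simp: Wd_def)
qed

lemma NM_two: "a \<noteq> b \<Longrightarrow> NM q {#a, b#} f = f [a,b] * hq q a b + f [b,a] * hq q b a"
  by (simp add: NM_def Wd_two)

lemma NM_two_eq: "NM q {#a, a#} f = f [a,a] * hq q a a"
  by (simp add: NM_def Wd_two)

locale qa =
  fixes n :: nat and q :: "nat \<Rightarrow> nat \<Rightarrow> 'k::field"
  assumes qinv: "\<And>i j. i < n \<Longrightarrow> j < n \<Longrightarrow> q i j * q j i = 1"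
    and qdiag: "\<And>i. i < n \<Longrightarrow> q i i = 1"
begin

abbreviation "I \<equiv> qideal n q"
abbreviation "R \<equiv> FA n :: (nat list \<Rightarrow> 'k) ring"
abbreviation "cl f \<equiv> I +>\<^bsub>R\<^esub> f"
abbreviation "OQ \<equiv> Oq n q"

definition J :: "(nat list \<Rightarrow> 'k) set" where
  "J = {f \<in> fa_carrier n. \<forall>M. NM q M f = 0}"

lemma q_nz: "i < n \<Longrightarrow> j < n \<Longrightarrow> q i j \<noteq> 0"
  using qinv by force

lemma hq_nz: "a < n \<Longrightarrow> b < n \<Longrightarrow> hq q a b \<noteq> 0"
  by (simp add: hq_def q_nz)

lemma hq_swap: "a < n \<Longrightarrow> b < n \<Longrightarrow> hq q b a = q a b * hq q a b"
  using qinv[of a b] qdiag[of a] by (auto simp: hq_def algebra_simps)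

lemma qrel_eq: "qrel q i j = (\<lambda>w. single [j,i] 1 w - q i j * single [i,j] 1 w)"
  by (auto simp: qrel_def fa_mult_var_var single_def)

lemma fa_diff_carrier: "f \<in> fa_carrier n \<Longrightarrow> g \<in> fa_carrier n \<Longrightarrow> (\<lambda>w. f w - g w) \<in> fa_carrier n"
  using fa_add_carrier[of f n "\<lambda>w. - g w"] fa_neg_carrier[of g n] by simp

lemma fa_smult_carrier: "f \<in> fa_carrier n \<Longrightarrow> (\<lambda>w. c * f w) \<in> fa_carrier n"
  unfolding fa_carrier_def by (auto intro: finite_subset)

lemma qrel_carrier: "i < n \<Longrightarrow> j < n \<Longrightarrow> qrel q i j \<in> fa_carrier n"
  unfolding qrel_eq
  by (intro fa_diff_carrier fa_smult_carrier single_carrier) auto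

lemma qrels_sub: "qrels n q \<subseteq> carrier R"
  by (auto simp: qrels_def FA_simps qrel_carrier)

lemma ideal_I: "ideal I R"
  unfolding qideal_def by (rule ring.genideal_ideal[OF ring_FA qrels_sub])

lemma NM_qrel: "i < n \<Longrightarrow> j < n \<Longrightarrow> NM q M (qrel q i j) = 0"
  unfolding qrel_eq NM_diff NM_smult NM_single
  using hq_swap[of j i] qinv[of i j] by (auto simp: add_mset_commute algebra_simps)

lemma J_ideal: "ideal J R"
proof (rule idealI[OF ring_FA])
  show "subgroup J (add_monoid R)"
  proof
    show "J \<subseteq> carrier (add_monoid R)" by (auto simp: J_def FA_simps)
    show "x \<otimes>\<^bsub>add_monoid R\<^esub> y \<in> J" if "x \<in> J" "y \<in> J" for x y
      using that by (auto simp: J_def FA_simps fa_add_carrier NM_add)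
    show "\<one>\<^bsub>add_monoid R\<^esub> \<in> J" by (auto simp: J_def FA_simps fa_zero_carrier NM_zero)
    show "inv\<^bsub>add_monoid R\<^esub> x \<in> J" if "x \<in> J" for x
    proof -
      have e: "inv\<^bsub>add_monoid R\<^esub> x = \<ominus>\<^bsub>R\<^esub> x" by (simp add: a_inv_def)
      show ?thesis using that unfolding e by (auto simp: J_def FA_a_inv fa_neg_carrier NM_neg)
    qed
  qed
  show "x \<otimes>\<^bsub>R\<^esub> a \<in> J" if "a \<in> J" "x \<in> carrier R" for a x
    using that by (auto simp: J_def FA_simps fa_mult_carrier NM_mult_left)
  show "a \<otimes>\<^bsub>R\<^esub> x \<in> J" if "a \<in> J" "x \<in> carrier R" for a x
    using that by (auto simp: J_def FA_simps fa_mult_carrier NM_mult_right)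
qed

lemma I_sub_J: "I \<subseteq> J"
  unfolding qideal_def
  by (rule ring.genideal_minimal[OF ring_FA J_ideal])
     (auto simp: qrels_def J_def qrel_carrier NM_qrel)

lemma I_NM: "f \<in> I \<Longrightarrow> NM q M f = 0"
  using I_sub_J by (auto simp: J_def)

lemma I_carrier: "f \<in> I \<Longrightarrow> f \<in> fa_carrier n"
  using I_sub_J by (auto simp: J_def)

lemma qrel_I: "i < n \<Longrightarrow> j < n \<Longrightarrow> qrel q i j \<in> I"
  using ring.genideal_self[OF ring_FA qrels_sub] by (auto simp: qideal_def qrels_def)

lemma Oq_carrier: "carrier OQ = cl ` fa_carrier n"
  by (auto simp: Oq_def FactRing_def A_RCOSETS_def' FA_simps)

lemma cl_mult: "f \<in> fa_carrier n \<Longrightarrow> g \<in> fa_carrier n \<Longrightarrow> cl f \<otimes>\<^bsub>OQ\<^esub> cl g = cl (fa_mult f g)"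
  using ideal.rcos_ring_hom[OF ideal_I] unfolding Oq_def ring_hom_def
  by (auto simp: FA_simps)

lemma cl_add: "f \<in> fa_carrier n \<Longrightarrow> g \<in> fa_carrier n \<Longrightarrow> cl f \<oplus>\<^bsub>OQ\<^esub> cl g = cl (\<lambda>w. f w + g w)"
  using ideal.rcos_ring_hom[OF ideal_I] unfolding Oq_def ring_hom_def
  by (auto simp: FA_simps)

lemma cl_one: "\<one>\<^bsub>OQ\<^esub> = cl (fa_const 1)"
  by (simp add: Oq_def FactRing_def FA_simps)

lemma ring_O: "ring OQ"
  unfolding Oq_def by (rule ideal.quotient_is_ring[OF ideal_I])

lemma cl_eq_iff: "f \<in> fa_carrier n \<Longrightarrow> g \<in> fa_carrier n \<Longrightarrow> cl f = cl g \<longleftrightarrow> (\<lambda>w. f w - g w) \<in> I"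
  using ring.quotient_eq_iff_same_a_r_cos[OF ring_FA ideal_I, of f g]
  by (simp add: FA_simps FA_minus)

lemma cl_eq_NM: "f \<in> fa_carrier n \<Longrightarrow> g \<in> fa_carrier n \<Longrightarrow> cl f = cl g \<Longrightarrow> NM q M f = NM q M g"
  using cl_eq_iff I_NM[of _ M] by (fastforce simp: NM_diff)

lemma cl_eqI: "f \<in> fa_carrier n \<Longrightarrow> g \<in> fa_carrier n \<Longrightarrow> (\<lambda>w. f w - g w) \<in> I \<Longrightarrow> cl f = cl g"
  using cl_eq_iff by blast

lemma Oq_scalar_cl: "Oq_scalar n q c = cl (fa_const c)"
  by (simp add: Oq_scalar_def)

lemma fa_mult_const_left: "fa_mult (fa_const c) f = (\<lambda>w. c * f w)"
proof
  fix w
  have "fa_mult (fa_const c) f w = (\<Sum>i\<le>length w. if i = 0 then c * f w else 0)"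
    unfolding fa_mult_def by (rule sum.cong) (auto simp: fa_const_def)
  thus "fa_mult (fa_const c) f w = c * f w" by simp
qed

lemma scalar_mult: "f \<in> fa_carrier n \<Longrightarrow> Oq_scalar n q c \<otimes>\<^bsub>OQ\<^esub> cl f = cl (\<lambda>w. c * f w)"
  by (simp add: Oq_scalar_cl cl_mult fa_const_carrier fa_mult_const_left)

end


definition Sb :: "(nat \<Rightarrow> 'k::field) \<Rightarrow> (nat \<Rightarrow> nat) \<Rightarrow> (nat list \<Rightarrow> 'k) \<Rightarrow> nat list \<Rightarrow> 'k" where
  "Sb l p f w = prod_list (map l w) * f (map (inv_into UNIV p) w)"

lemma map_inv_map: "p permutes S \<Longrightarrow> map p (map (inv_into UNIV p) w) = w"
  by (induct w) (auto simp: permutes_inverses)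

lemma map_map_inv: "p permutes S \<Longrightarrow> map (inv_into UNIV p) (map p w) = w"
  by (induct w) (auto simp: permutes_inverses)

lemma set_map_perm: "p permutes {..<n} \<Longrightarrow> set (map p w) \<subseteq> {..<n} \<longleftrightarrow> set w \<subseteq> {..<n}"
  using permutes_in_image[of p "{..<n}"] by auto

lemma Sb_carrier:
  assumes p: "p permutes {..<n}" and f: "f \<in> fa_carrier n"
  shows "Sb l p f \<in> fa_carrier n"
proof (rule fa_carrierI[where W="map p ` {w. f w \<noteq> 0}"])
  show "finite (map p ` {w. f w \<noteq> 0})" using f by (simp add: fa_carrier_def)
  show "w \<in> map p ` {w. f w \<noteq> 0}" if "Sb l p f w \<noteq> 0" for w
  proof -
    have "f (map (inv_into UNIV p) w) \<noteq> 0" using that by (auto simp: Sb_def)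
    thus ?thesis using map_inv_map[OF p, of w] by (metis (mono_tags) image_eqI mem_Collect_eq)
  qed
  show "set w \<subseteq> {..<n}" if win: "w \<in> map p ` {w. f w \<noteq> 0}" for w
  proof -
    obtain x where x: "w = map p x" "f x \<noteq> 0" using win by auto
    hence "set x \<subseteq> {..<n}" using f by (auto simp: fa_carrier_def)
    thus ?thesis using x(1) set_map_perm[OF p, of x] by simp
  qed
qed

lemma Sb_mult:
  assumes p: "p permutes {..<n}"
  shows "Sb l p (fa_mult f g) = fa_mult (Sb l p f) (Sb l p g)"
proof
  fix w
  have *: "prod_list (map l w) = prod_list (map l (take i w)) * prod_list (map l (drop i w))" for i
    by (metis append_take_drop_id map_append prod_list.append)
  show "Sb l p (fa_mult f g) w = fa_mult (Sb l p f) (Sb l p g) w"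
    unfolding Sb_def fa_mult_def sum_distrib_left length_map
  proof (rule sum.cong[OF refl])
    fix i assume "i \<in> {..length w}"
    show "prod_list (map l w) * (f (take i (map (inv_into UNIV p) w)) * g (drop i (map (inv_into UNIV p) w))) =
      prod_list (map l (take i w)) * f (map (inv_into UNIV p) (take i w)) *
      (prod_list (map l (drop i w)) * g (map (inv_into UNIV p) (drop i w)))"
      using *[of i] by (simp add: take_map drop_map mult_ac)
  qed
qed

lemma Sb_add: "Sb l p (\<lambda>w. f w + g w) = (\<lambda>w. Sb l p f w + Sb l p g w)"
  by (auto simp: Sb_def algebra_simps)

lemma Sb_const: "Sb l p (fa_const c) = fa_const c"
  by (auto simp: Sb_def fa_const_def)

lemma Sb_smult: "Sb l p (\<lambda>w. c * f w) = (\<lambda>w. c * Sb l p f w)"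
  by (auto simp: Sb_def algebra_simps)

lemma Sb_diff: "Sb l p (\<lambda>w. f w - g w) = (\<lambda>w. Sb l p f w - Sb l p g w)"
  by (auto simp: Sb_def algebra_simps)

lemma prod_list_map_mult: "prod_list (map (\<lambda>a. f a * g a) w) = prod_list (map f w) * prod_list (map (g :: _ \<Rightarrow> 'b::comm_monoid_mult) w)"
  by (induct w) (auto simp: ac_simps)

lemma prod_list_ones: "prod_list (map (\<lambda>_. 1) w) = 1"
  by (induct w) auto

lemma Sb_comp:
  assumes p: "p permutes S" and s: "s permutes S"
  shows "Sb l p (Sb m s f) = Sb (\<lambda>a. l a * m (inv_into UNIV p a)) (p \<circ> s) f"
proof
  fix w
  have e1: "inv_into UNIV (p \<circ> s) = inv_into UNIV s \<circ> inv_into UNIV p"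
    by (rule o_inv_distrib) (use p s permutes_bij in auto)
  have e2: "prod_list (map (\<lambda>a. l a * m (inv_into UNIV p a)) w) = prod_list (map l w) * prod_list (map m (map (inv_into UNIV p) w))"
    by (simp add: prod_list_map_mult o_def)
  show "Sb l p (Sb m s f) w = Sb (\<lambda>a. l a * m (inv_into UNIV p a)) (p \<circ> s) f w"
    unfolding Sb_def e1 e2 map_map by (simp add: ac_simps)
qed

lemma Sb_cong:
  assumes p: "p permutes {..<n}" and f: "f \<in> fa_carrier n"
    and eq: "\<And>a. a < n \<Longrightarrow> l a = l' a"
  shows "Sb l p f = Sb l' p f"
proof
  fix w
  show "Sb l p f w = Sb l' p f w"
  proof (cases "set w \<subseteq> {..<n}")
    case True
    hence "map l w = map l' w" using eq by (auto intro: map_cong)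
    hence "prod_list (map l w) = prod_list (map l' w)" by (rule arg_cong[where f=prod_list])
    thus ?thesis by (simp add: Sb_def)
  next
    case False
    hence "\<not> set (map (inv_into UNIV p) w) \<subseteq> {..<n}"
      using set_map_perm[OF permutes_inv[OF p]] by blast
    hence "f (map (inv_into UNIV p) w) = 0" using f fa_carrier_zero by blast
    thus ?thesis by (simp add: Sb_def)
  qed
qed

lemma Sb_id: "Sb (\<lambda>_. 1) id f = f"
  unfolding Sb_def by (simp add: fun_eq_iff prod_list_ones)

lemma Sb_single: "p permutes S \<Longrightarrow> Sb l p (single w c) = single (map p w) (prod_list (map l (map p w)) * c)"
proof
  fix u assume p: "p permutes S"
  have "map (inv_into UNIV p) u = w \<longleftrightarrow> u = map p w"
    using map_inv_map[OF p] map_map_inv[OF p] by metis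
  thus "Sb l p (single w c) u = single (map p w) (prod_list (map l (map p w)) * c) u"
    by (auto simp: Sb_def single_def)
qed

lemma Sb_var: "p permutes S \<Longrightarrow> Sb l p (fa_var i) = single [p i] (l (p i))"
proof -
  assume p: "p permutes S"
  have e: "fa_var i = single [i] 1" by (auto simp: fa_var_def single_def)
  show ?thesis unfolding e using Sb_single[OF p, of l "[i]" 1] by simp
qed

context qa begin

lemma Sb_ring_hom: "p permutes {..<n} \<Longrightarrow> Sb l p \<in> ring_hom R R"
  by (rule ring_hom_memI) (auto simp: FA_simps Sb_carrier Sb_mult Sb_add Sb_const)

lemma Sb_qrel:
  assumes p: "p \<in> Pq n q" and i: "i < n" and j: "j < n"
  shows "Sb l p (qrel q i j) = (\<lambda>w. (l (p i) * l (p j)) * qrel q (p i) (p j) w)"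
proof -
  have pp: "p permutes {..<n}" and pq: "q (p i) (p j) = q i j" using p i j by (auto simp: Pq_def)
  show ?thesis unfolding qrel_eq Sb_diff Sb_smult Sb_single[OF pp] pq
  proof (rule ext)
    fix w
    show "single (map p [j, i]) (prod_list (map l (map p [j, i])) * 1) w -
          q i j * single (map p [i, j]) (prod_list (map l (map p [i, j])) * 1) w =
          l (p i) * l (p j) * (single [p j, p i] 1 w - q i j * single [p i, p j] 1 w)"
    proof -
      have a: "single [p j, p i] (l (p i) * l (p j)) w = l (p i) * l (p j) * single [p j, p i] 1 w"
        by (simp add: single_def)
      have b: "single [p i, p j] (l (p i) * l (p j)) w = l (p i) * l (p j) * single [p i, p j] 1 w"
        by (simp add: single_def)
      show ?thesis by (simp add: a b algebra_simps)
    qed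
  qed
qed

lemma smult_I: "f \<in> I \<Longrightarrow> (\<lambda>w. c * f w) \<in> I"
  using ideal.I_l_closed[OF ideal_I, of f "fa_const c"]
  by (simp add: FA_simps fa_const_carrier fa_mult_const_left)

lemma Sb_I:
  assumes p: "p \<in> Pq n q" and f: "f \<in> I"
  shows "Sb l p f \<in> I"
proof -
  have pp: "p permutes {..<n}" using p by (auto simp: Pq_def)
  have rh: "ring_hom_ring R R (Sb l p)"
    by (rule ring_hom_ringI2[OF ring_FA ring_FA Sb_ring_hom[OF pp]])
  have "ideal {r \<in> carrier R. Sb l p r \<in> I} R"
    by (rule ring_hom_ring.ideal_vimage[OF rh ideal_I])
  moreover have "qrels n q \<subseteq> {r \<in> carrier R. Sb l p r \<in> I}"
  proof
    fix r assume "r \<in> qrels n q"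
    then obtain i j where r: "r = qrel q i j" "i < n" "j < n" by (auto simp: qrels_def)
    have "p i < n" "p j < n" using r pp permutes_in_image[OF pp] by auto
    hence "qrel q (p i) (p j) \<in> I" by (rule qrel_I)
    thus "r \<in> {r \<in> carrier R. Sb l p r \<in> I}"
      using r Sb_qrel[OF p r(2,3)] smult_I by (auto simp: FA_simps qrel_carrier)
  qed
  ultimately have "I \<subseteq> {r \<in> carrier R. Sb l p r \<in> I}"
    unfolding qideal_def by (rule ring.genideal_minimal[OF ring_FA])
  thus ?thesis using f by auto
qed

definition Phi :: "(nat \<Rightarrow> 'k) \<Rightarrow> (nat \<Rightarrow> nat) \<Rightarrow> (nat list \<Rightarrow> 'k) set \<Rightarrow> (nat list \<Rightarrow> 'k) set" where
  "Phi l p = (\<lambda>A\<in>carrier OQ. cl (Sb l p (SOME f. f \<in> fa_carrier n \<and> A = cl f)))"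

lemma cl_carrier: "f \<in> fa_carrier n \<Longrightarrow> cl f \<in> carrier OQ"
  unfolding Oq_carrier by (rule imageI)

lemma Phi_cl:
  assumes p: "p \<in> Pq n q" and f: "f \<in> fa_carrier n"
  shows "Phi l p (cl f) = cl (Sb l p f)"
proof -
  have pp: "p permutes {..<n}" using p by (auto simp: Pq_def)
  define g where "g = (SOME g. g \<in> fa_carrier n \<and> cl f = cl g)"
  have "g \<in> fa_carrier n \<and> cl f = cl g" unfolding g_def by (rule someI[of _ f]) (simp add: f)
  hence g: "g \<in> fa_carrier n" "cl f = cl g" by auto
  hence "(\<lambda>w. f w - g w) \<in> I" using cl_eq_iff f by blast
  hence "Sb l p (\<lambda>w. f w - g w) \<in> I" by (rule Sb_I[OF p])
  hence "cl (Sb l p f) = cl (Sb l p g)"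
    unfolding Sb_diff by (intro cl_eqI Sb_carrier pp f g)
  thus ?thesis using cl_carrier[OF f] unfolding Phi_def g_def by simp
qed

lemma Phi_ext: "Phi l p \<in> extensional (carrier OQ)"
  by (simp add: Phi_def)

lemma Phi_cong:
  assumes p: "p \<in> Pq n q" and eq: "\<And>a. a < n \<Longrightarrow> l a = l' a"
  shows "Phi l p = Phi l' p"
proof
  fix A
  have pp: "p permutes {..<n}" using p by (auto simp: Pq_def)
  show "Phi l p A = Phi l' p A"
  proof (cases "A \<in> carrier OQ")
    case True
    then obtain f where f: "f \<in> fa_carrier n" "A = cl f" by (auto simp: Oq_carrier)
    show ?thesis using f by (simp add: Phi_cl[OF p] Sb_cong[OF pp f(1) eq])
  qed (simp add: Phi_def)
qed

lemma Phi_carrier: "p \<in> Pq n q \<Longrightarrow> A \<in> carrier OQ \<Longrightarrow> Phi l p A \<in> carrier OQ"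
  by (auto simp: Oq_carrier Phi_cl Sb_carrier Pq_def)

lemma Phi_hom:
  assumes p: "p \<in> Pq n q"
  shows "Phi l p \<in> ring_hom OQ OQ"
proof -
  have pp: "p permutes {..<n}" using p by (auto simp: Pq_def)
  show ?thesis
  proof (rule ring_hom_memI)
    show "Phi l p x \<in> carrier OQ" if "x \<in> carrier OQ" for x using Phi_carrier[OF p that] .
    show "Phi l p (x \<otimes>\<^bsub>OQ\<^esub> y) = Phi l p x \<otimes>\<^bsub>OQ\<^esub> Phi l p y" if "x \<in> carrier OQ" "y \<in> carrier OQ" for x y
      using that by (auto simp: Oq_carrier cl_mult Phi_cl[OF p] fa_mult_carrier Sb_carrier[OF pp] Sb_mult[OF pp])
    show "Phi l p (x \<oplus>\<^bsub>OQ\<^esub> y) = Phi l p x \<oplus>\<^bsub>OQ\<^esub> Phi l p y" if "x \<in> carrier OQ" "y \<in> carrier OQ" for x y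
      using that by (auto simp: Oq_carrier cl_add Phi_cl[OF p] fa_add_carrier Sb_carrier[OF pp] Sb_add)
    show "Phi l p \<one>\<^bsub>OQ\<^esub> = \<one>\<^bsub>OQ\<^esub>"
      by (simp add: cl_one Phi_cl[OF p] fa_const_carrier Sb_const)
  qed
qed

lemma Pq_comp:
  assumes p: "p \<in> Pq n q" and s: "s \<in> Pq n q"
  shows "p \<circ> s \<in> Pq n q"
proof -
  have pp: "p permutes {..<n}" and ss: "s permutes {..<n}" using p s by (auto simp: Pq_def)
  have "q (p (s i)) (p (s j)) = q i j" if "i < n" "j < n" for i j
  proof -
    have "s i < n" "s j < n" using that permutes_in_image[OF ss] by auto
    thus ?thesis using p s that by (auto simp: Pq_def)
  qed
  thus ?thesis using permutes_compose[OF ss pp] by (auto simp: Pq_def)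
qed

lemma Phi_comp:
  assumes p: "p \<in> Pq n q" and s: "s \<in> Pq n q"
  shows "compose (carrier OQ) (Phi l p) (Phi m s) = Phi (\<lambda>a. l a * m (inv_into UNIV p a)) (p \<circ> s)"
proof
  fix A
  have pp: "p permutes {..<n}" and ss: "s permutes {..<n}" using p s by (auto simp: Pq_def)
  have ps: "p \<circ> s \<in> Pq n q" by (rule Pq_comp[OF p s])
  show "compose (carrier OQ) (Phi l p) (Phi m s) A = Phi (\<lambda>a. l a * m (inv_into UNIV p a)) (p \<circ> s) A"
  proof (cases "A \<in> carrier OQ")
    case True
    then obtain f where f: "f \<in> fa_carrier n" "A = cl f" by (auto simp: Oq_carrier)
    show ?thesis using f True
      by (simp add: compose_def Phi_cl[OF s] Phi_cl[OF p] Phi_cl[OF ps] Sb_carrier[OF ss] Sb_comp[OF pp ss])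
  qed (simp add: Phi_def compose_def)
qed

lemma id_Pq: "id \<in> Pq n q"
  by (simp add: Pq_def permutes_id)

lemma Phi_id: "Phi (\<lambda>_. 1) id = (\<lambda>A\<in>carrier OQ. A)"
proof
  fix A show "Phi (\<lambda>_. 1) id A = (\<lambda>A\<in>carrier OQ. A) A"
  proof (cases "A \<in> carrier OQ")
    case True
    then obtain f where f: "f \<in> fa_carrier n" "A = cl f" by (auto simp: Oq_carrier)
    thus ?thesis using True by (simp add: Phi_cl[OF id_Pq] Sb_id)
  qed (simp add: Phi_def)
qed

end


context qa begin

lemma Pq_perm: "p \<in> Pq n q \<Longrightarrow> p permutes {..<n}"
  by (simp add: Pq_def)

lemma Pq_inv: assumes p: "p \<in> Pq n q" shows "inv_into UNIV p \<in> Pq n q"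
proof -
  have pp: "p permutes {..<n}" by (rule Pq_perm[OF p])
  have ip: "inv_into UNIV p permutes {..<n}" by (rule permutes_inv[OF pp])
  have "q (inv_into UNIV p i) (inv_into UNIV p j) = q i j" if "i < n" "j < n" for i j
  proof -
    have "inv_into UNIV p i < n" "inv_into UNIV p j < n" using that permutes_in_image[OF ip] by auto
    hence "q (p (inv_into UNIV p i)) (p (inv_into UNIV p j)) = q (inv_into UNIV p i) (inv_into UNIV p j)"
      using p by (auto simp: Pq_def)
    thus ?thesis by (simp add: permutes_inverses[OF pp])
  qed
  thus ?thesis using ip by (auto simp: Pq_def)
qed

lemma Phi_cl': "p \<in> Pq n q \<Longrightarrow> A \<in> carrier OQ \<Longrightarrow> \<exists>f\<in>fa_carrier n. A = cl f \<and> Phi l p A = cl (Sb l p f)"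
  by (auto simp: Oq_carrier Phi_cl)

lemma Phi_inverse:
  assumes p: "p \<in> Pq n q" and l: "\<And>a. a < n \<Longrightarrow> l a \<noteq> 0" and A: "A \<in> carrier OQ"
  shows "Phi l p (Phi (\<lambda>a. inverse (l (p a))) (inv_into UNIV p) A) = A"
    and "Phi (\<lambda>a. inverse (l (p a))) (inv_into UNIV p) (Phi l p A) = A"
proof -
  have pp: "p permutes {..<n}" by (rule Pq_perm[OF p])
  have ip: "inv_into UNIV p \<in> Pq n q" by (rule Pq_inv[OF p])
  have c1: "compose (carrier OQ) (Phi l p) (Phi (\<lambda>a. inverse (l (p a))) (inv_into UNIV p))
      = Phi (\<lambda>_. 1) id"
  proof -
    have "compose (carrier OQ) (Phi l p) (Phi (\<lambda>a. inverse (l (p a))) (inv_into UNIV p))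
        = Phi (\<lambda>a. l a * inverse (l (p (inv_into UNIV p a)))) (p \<circ> inv_into UNIV p)"
      by (rule Phi_comp[OF p ip])
    also have "p \<circ> inv_into UNIV p = id" by (rule permutes_inv_o(1)[OF pp])
    also have "Phi (\<lambda>a. l a * inverse (l (p (inv_into UNIV p a)))) id = Phi (\<lambda>_. 1) id"
      by (rule Phi_cong[OF id_Pq]) (simp add: permutes_inverses[OF pp] l)
    finally show ?thesis .
  qed
  have c2: "compose (carrier OQ) (Phi (\<lambda>a. inverse (l (p a))) (inv_into UNIV p)) (Phi l p)
      = Phi (\<lambda>_. 1) id"
  proof -
    have "compose (carrier OQ) (Phi (\<lambda>a. inverse (l (p a))) (inv_into UNIV p)) (Phi l p)
        = Phi (\<lambda>a. inverse (l (p a)) * l (inv_into UNIV (inv_into UNIV p) a)) (inv_into UNIV p \<circ> p)"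
      by (rule Phi_comp[OF ip p])
    also have "inv_into UNIV p \<circ> p = id" by (rule permutes_inv_o(2)[OF pp])
    also have "Phi (\<lambda>a. inverse (l (p a)) * l (inv_into UNIV (inv_into UNIV p) a)) id = Phi (\<lambda>_. 1) id"
    proof (rule Phi_cong[OF id_Pq])
      fix a assume a: "a < n"
      hence "p a < n" using permutes_in_image[OF pp] by auto
      thus "inverse (l (p a)) * l (inv_into UNIV (inv_into UNIV p) a) = 1"
        by (simp add: permutes_inv_inv[OF pp] l)
    qed
    finally show ?thesis .
  qed
  show "Phi l p (Phi (\<lambda>a. inverse (l (p a))) (inv_into UNIV p) A) = A"
    using fun_cong[OF c1, of A] A by (simp add: Phi_id compose_def)
  show "Phi (\<lambda>a. inverse (l (p a))) (inv_into UNIV p) (Phi l p A) = A"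
    using fun_cong[OF c2, of A] A by (simp add: Phi_id compose_def)
qed

lemma Oq_scalar_carrier: "Oq_scalar n q c \<in> carrier OQ"
  by (simp add: Oq_scalar_cl cl_carrier fa_const_carrier)

lemma Phi_Aut:
  assumes p: "p \<in> Pq n q" and l: "\<And>a. a < n \<Longrightarrow> l a \<noteq> 0"
  shows "Phi l p \<in> Aut_gr_set n q"
proof -
  have pp: "p permutes {..<n}" by (rule Pq_perm[OF p])
  have ip: "inv_into UNIV p \<in> Pq n q" by (rule Pq_inv[OF p])
  have i1: "\<And>A. A \<in> carrier OQ \<Longrightarrow> Phi (\<lambda>a. inverse (l (p a))) (inv_into UNIV p) (Phi l p A) = A"
    using Phi_inverse(2)[OF p l] .
  have i2: "\<And>A. A \<in> carrier OQ \<Longrightarrow> Phi l p (Phi (\<lambda>a. inverse (l (p a))) (inv_into UNIV p) A) = A"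
    using Phi_inverse(1)[OF p l] .
  have bij: "bij_betw (Phi l p) (carrier OQ) (carrier OQ)"
    by (rule bij_betwI[where g="Phi (\<lambda>a. inverse (l (p a))) (inv_into UNIV p)"])
       (simp_all add: Pi_iff Phi_carrier[OF p] Phi_carrier[OF ip] i1 i2)
  have lin: "Phi l p (Oq_scalar n q c \<otimes>\<^bsub>OQ\<^esub> a) = Oq_scalar n q c \<otimes>\<^bsub>OQ\<^esub> Phi l p a"
    if aC: "a \<in> carrier OQ" for c a
  proof -
    obtain f where f: "f \<in> fa_carrier n" "a = cl f" using aC by (auto simp: Oq_carrier)
    show ?thesis using f
      by (simp add: scalar_mult Phi_cl[OF p] fa_smult_carrier Sb_carrier[OF pp] Sb_smult)
  qed
  have gr: "Phi l p ` Oq_hom n q d \<subseteq> Oq_hom n q d" for d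
  proof
    fix B assume "B \<in> Phi l p ` Oq_hom n q d"
    then obtain f where f: "f \<in> fa_carrier n" "\<And>w. f w \<noteq> 0 \<Longrightarrow> length w = d" "B = Phi l p (cl f)"
      by (auto simp: Oq_hom_def FA_simps)
    have "Sb l p f w \<noteq> 0 \<Longrightarrow> length w = d" for w
      using f(2)[of "map (inv_into UNIV p) w"] by (auto simp: Sb_def)
    thus "B \<in> Oq_hom n q d"
      using f Sb_carrier[OF pp f(1)] by (auto simp: Oq_hom_def FA_simps Phi_cl[OF p])
  qed
  show ?thesis
    unfolding Aut_gr_set_def ring_iso_def
    using Phi_hom[OF p] bij Phi_ext lin gr by auto
qed

lemma Phi_var: "p \<in> Pq n q \<Longrightarrow> i < n \<Longrightarrow> Phi l p (cl (fa_var i)) = cl (single [p i] (l (p i)))"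
  by (simp add: Phi_cl fa_var_carrier Sb_var[OF Pq_perm])

lemma single_eq_cl:
  assumes "a < n" "b < n" "c \<noteq> 0" "cl (single [a] c) = cl (single [b] d)"
  shows "a = b \<and> c = d"
proof -
  have "NM q {#a#} (single [a] c) = NM q {#a#} (single [b] d)"
    by (rule cl_eq_NM) (use assms in \<open>auto intro: single_carrier\<close>)
  thus ?thesis using assms(3) by (auto simp: NM_one single_def split: if_splits)
qed

lemma Phi_inj:
  assumes p: "p \<in> Pq n q" and s: "s \<in> Pq n q" and l: "\<And>a. a < n \<Longrightarrow> l a \<noteq> 0"
    and eq: "Phi l p = Phi m s"
  shows "p = s" and "\<And>a. a < n \<Longrightarrow> l a = m a"
proof -
  have pp: "p permutes {..<n}" and ss: "s permutes {..<n}" using p s by (auto simp: Pq_def)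
  have *: "p i = s i \<and> l (p i) = m (s i)" if "i < n" for i
  proof -
    have "cl (single [p i] (l (p i))) = cl (single [s i] (m (s i)))"
      using Phi_var[OF p that, of l] Phi_var[OF s that, of m] eq by simp
    moreover have "p i < n" "s i < n" using that permutes_in_image[OF pp] permutes_in_image[OF ss] by auto
    ultimately show ?thesis using single_eq_cl l by blast
  qed
  show "p = s"
  proof
    fix i show "p i = s i"
      using * permutes_not_in[OF pp] permutes_not_in[OF ss] by (cases "i < n") auto
  qed
  fix a assume a: "a < n"
  have "inv_into UNIV p a < n" using a permutes_in_image[OF permutes_inv[OF pp]] by auto
  thus "l a = m a" using *[of "inv_into UNIV p a"] by (simp add: permutes_inverses[OF pp])
qed

end


lemma fa_mult_single_single: "fa_mult (single u c) (single v d) = single (u @ v) (c * d)"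
proof
  fix w
  have "fa_mult (single u c) (single v d) w
      = (\<Sum>k\<le>length w. if k = length u then (if w = u @ v then c * d else 0) else 0)"
    unfolding fa_mult_def
  proof (rule sum.cong[OF refl])
    fix k assume k: "k \<in> {..length w}"
    have iff: "(take k w = u \<and> drop k w = v) \<longleftrightarrow> (k = length u \<and> w = u @ v)"
    proof
      assume h: "take k w = u \<and> drop k w = v"
      hence "length u = k" using k by auto
      moreover have "w = u @ v" using h by (metis append_take_drop_id)
      ultimately show "k = length u \<and> w = u @ v" by simp
    qed auto
    have e: "single u c (take k w) * single v d (drop k w) = (if take k w = u \<and> drop k w = v then c * d else 0)"
      by (simp add: single_def)
    show "single u c (take k w) * single v d (drop k w)
        = (if k = length u then (if w = u @ v then c * d else 0) else 0)"
      unfolding e iff by simp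
  qed
  also have "\<dots> = single (u @ v) (c * d) w"
    by (subst sum.delta[OF finite_atMost]) (auto simp: single_def)
  finally show "fa_mult (single u c) (single v d) w = single (u @ v) (c * d) w" .
qed

lemma var_single: "fa_var i = single [i] 1"
  by (auto simp: fa_var_def single_def)

lemma single_Nil: "single [] c = fa_const c"
  by (auto simp: fa_const_def single_def)

lemma single_zero: "single w 0 = (\<lambda>_. 0)"
  by (auto simp: single_def)

lemma single_add: "single w (c + d) = (\<lambda>u. single w c u + single w d u)"
  by (auto simp: single_def)

lemma fun_induct:
  fixes f :: "nat list \<Rightarrow> 'k::field" and P :: "(nat list \<Rightarrow> 'k) \<Rightarrow> bool"
  assumes f: "f \<in> fa_carrier n" "\<And>w. f w \<noteq> 0 \<Longrightarrow> D w"
    and zero: "P (\<lambda>_. 0)"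
    and sing: "\<And>w c. set w \<subseteq> {..<n} \<Longrightarrow> D w \<Longrightarrow> P (single w c)"
    and add: "\<And>(f :: nat list \<Rightarrow> 'k) g. f \<in> fa_carrier n \<Longrightarrow> g \<in> fa_carrier n \<Longrightarrow> P f \<Longrightarrow> P g \<Longrightarrow> P (\<lambda>w. f w + g w)"
  shows "P f"
proof -
  have "\<forall>f :: nat list \<Rightarrow> 'k. f \<in> fa_carrier n \<and> (\<forall>w. f w \<noteq> 0 \<longrightarrow> D w \<and> w \<in> S) \<longrightarrow> P f" if "finite S" for S
    using that
  proof (induction S rule: finite_induct)
    case empty
    show ?case
    proof (intro allI impI)
      fix f :: "nat list \<Rightarrow> 'k" assume "f \<in> fa_carrier n \<and> (\<forall>w. f w \<noteq> 0 \<longrightarrow> D w \<and> w \<in> {})"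
      hence "f = (\<lambda>_. 0)" by auto
      thus "P f" using zero by simp
    qed
  next
    case (insert x S)
    show ?case
    proof (intro allI impI)
      fix f :: "nat list \<Rightarrow> 'k" assume a: "f \<in> fa_carrier n \<and> (\<forall>w. f w \<noteq> 0 \<longrightarrow> D w \<and> w \<in> insert x S)"
      define f' where "f' = f(x := 0)"
      have f'c: "f' \<in> fa_carrier n"
        using a unfolding f'_def fa_carrier_def
        by (auto intro: finite_subset[of _ "{w. f w \<noteq> 0}"])
      have "\<forall>w. f' w \<noteq> 0 \<longrightarrow> D w \<and> w \<in> S" using a by (auto simp: f'_def)
      hence Pf': "P f'" using insert.IH f'c by blast
      have sc: "single x (f x) \<in> fa_carrier n \<and> P (single x (f x))"
      proof (cases "f x = 0")
        case True thus ?thesis using zero fa_zero_carrier by (simp add: single_zero)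
      next
        case False
        hence "set x \<subseteq> {..<n}" "D x" using a by (auto simp: fa_carrier_def)
        thus ?thesis using sing single_carrier by blast
      qed
      have fe: "f = (\<lambda>w. f' w + single x (f x) w)" by (auto simp: f'_def single_def)
      have "P (\<lambda>w. f' w + single x (f x) w)" using add[OF f'c _ Pf'] sc by blast
      thus "P f" using fe by metis
    qed
  qed
  hence "\<forall>f'. f' \<in> fa_carrier n \<and> (\<forall>w. f' w \<noteq> 0 \<longrightarrow> D w \<and> w \<in> {w. f w \<noteq> 0}) \<longrightarrow> P f'"
    using f(1) by (auto simp: fa_carrier_def)
  thus ?thesis using f by auto
qed

context qa begin

lemma ring_hom_O: "\<phi> \<in> ring_hom OQ OQ \<Longrightarrow> A \<in> carrier OQ \<Longrightarrow> B \<in> carrier OQ \<Longrightarrow>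
   \<phi> (A \<otimes>\<^bsub>OQ\<^esub> B) = \<phi> A \<otimes>\<^bsub>OQ\<^esub> \<phi> B \<and> \<phi> (A \<oplus>\<^bsub>OQ\<^esub> B) = \<phi> A \<oplus>\<^bsub>OQ\<^esub> \<phi> B"
  by (simp add: ring_hom_def)

lemma cl_zero: "cl (\<lambda>_. 0) = \<zero>\<^bsub>OQ\<^esub>"
  using ring_hom_zero[OF ideal.rcos_ring_hom[OF ideal_I] ring_FA ideal.quotient_is_ring[OF ideal_I]]
  by (simp add: Oq_def FA_simps)

lemma hom_zero_O: "\<phi> \<in> ring_hom OQ OQ \<Longrightarrow> \<phi> \<zero>\<^bsub>OQ\<^esub> = \<zero>\<^bsub>OQ\<^esub>"
  using ring_hom_zero[OF _ ring_O ring_O] by blast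

lemma cl_single_Cons: "a < n \<Longrightarrow> set w \<subseteq> {..<n} \<Longrightarrow>
    cl (single (a # w) c) = cl (fa_var a) \<otimes>\<^bsub>OQ\<^esub> cl (single w c)"
  by (simp add: cl_mult fa_var_carrier single_carrier var_single fa_mult_single_single)

lemma scalar_one: "Oq_scalar n q c \<otimes>\<^bsub>OQ\<^esub> \<one>\<^bsub>OQ\<^esub> = Oq_scalar n q c"
  by (rule monoid.r_one[OF ring.is_monoid[OF ring_O] Oq_scalar_carrier])

lemma determ:
  assumes h1: "\<phi> \<in> ring_hom OQ OQ" and h2: "\<psi> \<in> ring_hom OQ OQ"
    and l1: "\<And>c A. A \<in> carrier OQ \<Longrightarrow> \<phi> (Oq_scalar n q c \<otimes>\<^bsub>OQ\<^esub> A) = Oq_scalar n q c \<otimes>\<^bsub>OQ\<^esub> \<phi> A"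
    and l2: "\<And>c A. A \<in> carrier OQ \<Longrightarrow> \<psi> (Oq_scalar n q c \<otimes>\<^bsub>OQ\<^esub> A) = Oq_scalar n q c \<otimes>\<^bsub>OQ\<^esub> \<psi> A"
    and gen: "\<And>a. a < n \<Longrightarrow> \<phi> (cl (fa_var a)) = \<psi> (cl (fa_var a))"
    and A: "A \<in> carrier OQ"
  shows "\<phi> A = \<psi> A"
proof -
  have one1: "\<phi> \<one>\<^bsub>OQ\<^esub> = \<one>\<^bsub>OQ\<^esub>" and one2: "\<psi> \<one>\<^bsub>OQ\<^esub> = \<one>\<^bsub>OQ\<^esub>"
    using h1 h2 by (simp_all add: ring_hom_def)
  have sing: "\<phi> (cl (single w c)) = \<psi> (cl (single w c))" if "set w \<subseteq> {..<n}" for w c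
    using that
  proof (induction w)
    case Nil
    have "cl (single [] c) = Oq_scalar n q c \<otimes>\<^bsub>OQ\<^esub> \<one>\<^bsub>OQ\<^esub>"
      unfolding scalar_one by (simp add: single_Nil Oq_scalar_cl)
    thus ?case using l1[of "\<one>\<^bsub>OQ\<^esub>" c] l2[of "\<one>\<^bsub>OQ\<^esub>" c] one1 one2
      ring.ring_simprules(6)[OF ring_O] by simp
  next
    case (Cons a w)
    hence a: "a < n" "set w \<subseteq> {..<n}" by auto
    show ?case
      using ring_hom_O[OF h1, of "cl (fa_var a)" "cl (single w c)"]
        ring_hom_O[OF h2, of "cl (fa_var a)" "cl (single w c)"]
        Cons.IH[OF a(2)] gen[OF a(1)]
      by (simp add: cl_single_Cons[OF a] cl_carrier fa_var_carrier[OF a(1)] single_carrier[OF a(2)])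
  qed
  obtain f where f: "f \<in> fa_carrier n" "A = cl f" using A by (auto simp: Oq_carrier)
  have "\<phi> (cl f) = \<psi> (cl f)"
  proof (rule fun_induct[where D="\<lambda>_. True", OF f(1)])
    show "\<phi> (cl (\<lambda>_. 0)) = \<psi> (cl (\<lambda>_. 0))" by (simp add: cl_zero hom_zero_O[OF h1] hom_zero_O[OF h2])
    show "\<phi> (cl (single w c)) = \<psi> (cl (single w c))" if "set w \<subseteq> {..<n}" for w c
      using sing[OF that] .
    show "\<phi> (cl (\<lambda>w. f w + g w)) = \<psi> (cl (\<lambda>w. f w + g w))"
      if "f \<in> fa_carrier n" "g \<in> fa_carrier n" "\<phi> (cl f) = \<psi> (cl f)" "\<phi> (cl g) = \<psi> (cl g)" for f g
      using that ring_hom_O[OF h1, of "cl f" "cl g"] ring_hom_O[OF h2, of "cl f" "cl g"]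
      by (simp add: cl_add[symmetric] cl_carrier)
  qed auto
  thus ?thesis using f by simp
qed

end


definition homog :: "(nat list \<Rightarrow> 'k::field) \<Rightarrow> nat \<Rightarrow> bool" where
  "homog f d = (\<forall>w. f w \<noteq> 0 \<longrightarrow> length w = d)"

context qa begin

lemma Oq_hom_iff: "A \<in> Oq_hom n q d \<longleftrightarrow> (\<exists>f. f \<in> fa_carrier n \<and> homog f d \<and> A = cl f)"
  by (auto simp: Oq_hom_def homog_def FA_simps)

lemma I_add: "f \<in> I \<Longrightarrow> g \<in> I \<Longrightarrow> (\<lambda>w. f w + g w) \<in> I"
  using additive_subgroup.a_closed[OF ideal.axioms(1)[OF ideal_I], of f g] by (simp add: FA_simps)

lemma I_zero: "(\<lambda>_. 0) \<in> I"
  using additive_subgroup.zero_closed[OF ideal.axioms(1)[OF ideal_I]] by (simp add: FA_simps)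

definition T :: "nat \<Rightarrow> (nat list \<Rightarrow> 'k) \<Rightarrow> nat list \<Rightarrow> 'k" where
  "T i f = (\<lambda>w. if length w = 1 then q (hd w) i * f w else 0)"

lemma T_carrier: "f \<in> fa_carrier n \<Longrightarrow> T i f \<in> fa_carrier n"
  unfolding fa_carrier_def T_def by (auto intro: finite_subset[of _ "{w. f w \<noteq> 0}"])

lemma T_homog: "homog (T i f) 1"
  by (simp add: homog_def T_def)

lemma T_add: "T i (\<lambda>w. f w + g w) = (\<lambda>w. T i f w + T i g w)"
  by (auto simp: T_def algebra_simps)

lemma commute_rel:
  assumes f: "f \<in> fa_carrier n" "homog f 1" and i: "i < n"
  shows "(\<lambda>w. fa_mult (fa_var i) f w - fa_mult (T i f) (fa_var i) w) \<in> I"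
proof (rule fun_induct[where D="\<lambda>w. length w = 1", OF f(1)])
  show "f w \<noteq> 0 \<Longrightarrow> length w = 1" for w using f(2) by (simp add: homog_def)
  show "(\<lambda>w. fa_mult (fa_var i) (\<lambda>_. 0) w - fa_mult (T i (\<lambda>_. 0)) (fa_var i) w) \<in> I"
  proof -
    have "T i (\<lambda>_. 0) = (\<lambda>_. 0)" by (simp add: T_def fun_eq_iff)
    moreover have "fa_mult h (\<lambda>_. 0) = (\<lambda>_. 0)" "fa_mult (\<lambda>_. 0) h = (\<lambda>_. 0)" for h :: "nat list \<Rightarrow> 'k"
      by (simp_all add: fa_mult_def fun_eq_iff)
    ultimately show ?thesis by (simp add: I_zero)
  qed
  show "(\<lambda>w. fa_mult (fa_var i) (single u c) w - fa_mult (T i (single u c)) (fa_var i) w) \<in> I"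
    if su: "set u \<subseteq> {..<n}" and lu: "length u = 1" for u c
  proof -
    obtain m where u: "u = [m]" using lu by (cases u) auto
    have m: "m < n" using su u by auto
    have TT: "T i (single [m] c) = single [m] (q m i * c)" by (auto simp: T_def single_def)
    have s1: "single [i, m] (1 * c) = (\<lambda>w. c * single [i, m] 1 w)" by (auto simp: single_def)
    have s2: "single [m, i] (q m i * c * 1) = (\<lambda>w. q m i * c * single [m, i] 1 w)" by (auto simp: single_def)
    have "(\<lambda>w. fa_mult (fa_var i) (single u c) w - fa_mult (T i (single u c)) (fa_var i) w)
        = (\<lambda>w. c * qrel q m i w)"
      unfolding u TT var_single fa_mult_single_single qrel_eq
      by (simp only: append.simps s1 s2) (simp add: algebra_simps)
    thus ?thesis using smult_I qrel_I[OF m i] by simp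
  qed
  show "(\<lambda>w. fa_mult (fa_var i) (\<lambda>w. g w + h w) w - fa_mult (T i (\<lambda>w. g w + h w)) (fa_var i) w) \<in> I"
    if "g \<in> fa_carrier n" "h \<in> fa_carrier n"
      "(\<lambda>w. fa_mult (fa_var i) g w - fa_mult (T i g) (fa_var i) w) \<in> I"
      "(\<lambda>w. fa_mult (fa_var i) h w - fa_mult (T i h) (fa_var i) w) \<in> I" for g h
    using I_add[OF that(3,4)] by (simp add: T_add fa_mult_ldistr fa_mult_rdistr algebra_simps)
qed

lemma commute_cl:
  assumes f: "f \<in> fa_carrier n" "homog f 1" and i: "i < n"
  shows "cl (fa_var i) \<otimes>\<^bsub>OQ\<^esub> cl f = cl (T i f) \<otimes>\<^bsub>OQ\<^esub> cl (fa_var i)"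
  using commute_rel[OF f i] f
  by (simp add: cl_mult fa_var_carrier[OF i] T_carrier cl_eqI fa_mult_carrier)

lemma mult_homog1: "homog f 1 \<Longrightarrow> homog g 1 \<Longrightarrow> fa_mult f g [a, b] = f [a] * g [b]"
proof -
  assume f: "homog f 1" and g: "homog g 1"
  have f0: "f [] = 0" "f [a, b] = 0" using f unfolding homog_def by (metis length_0_conv zero_neq_one, auto)
  have g0: "g [] = 0" using g unfolding homog_def by (metis length_0_conv zero_neq_one)
  show ?thesis by (simp add: fa_mult_Cons fa_mult_Nil f0 g0)
qed

lemma homog1_var: "homog (fa_var i) 1"
  by (simp add: homog_def fa_var_def)

lemma homog1_eq: "homog f 1 \<Longrightarrow> homog g 1 \<Longrightarrow> (\<And>a. f [a] = g [a]) \<Longrightarrow> f = g"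
proof
  fix w assume f: "homog f 1" and g: "homog g 1" and e: "\<And>a. f [a] = g [a]"
  show "f w = g w"
  proof (cases "length w = 1")
    case True then obtain a where "w = [a]" by (cases w) auto
    thus ?thesis using e by simp
  next
    case False
    have "f w = 0" using f False unfolding homog_def by metis
    moreover have "g w = 0" using g False unfolding homog_def by metis
    ultimately show ?thesis by simp
  qed
qed

end

locale aut = qa n q for n and q :: "nat \<Rightarrow> nat \<Rightarrow> 'k::field" +
  fixes \<phi>
  assumes rows: "\<And>i j. i < n \<Longrightarrow> j < n \<Longrightarrow> i \<noteq> j \<Longrightarrow> (\<exists>l<n. q i l \<noteq> q j l)"
    and phi: "\<phi> \<in> Aut_gr_set n q"
begin

lemma phi_hom: "\<phi> \<in> ring_hom OQ OQ" and phi_bij: "bij_betw \<phi> (carrier OQ) (carrier OQ)"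
  and phi_lin: "\<And>c A. A \<in> carrier OQ \<Longrightarrow> \<phi> (Oq_scalar n q c \<otimes>\<^bsub>OQ\<^esub> A) = Oq_scalar n q c \<otimes>\<^bsub>OQ\<^esub> \<phi> A"
  and phi_gr: "\<And>d. \<phi> ` Oq_hom n q d \<subseteq> Oq_hom n q d"
  and phi_ext: "\<phi> \<in> extensional (carrier OQ)"
  using phi by (auto simp: Aut_gr_set_def ring_iso_def)

lemma phi_homog: "f \<in> fa_carrier n \<Longrightarrow> homog f d \<Longrightarrow> \<exists>g. g \<in> fa_carrier n \<and> homog g d \<and> \<phi> (cl f) = cl g"
proof -
  assume "f \<in> fa_carrier n" "homog f d"
  hence "cl f \<in> Oq_hom n q d" by (auto simp: Oq_hom_iff)
  hence "\<phi> (cl f) \<in> Oq_hom n q d" using phi_gr by blast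
  thus ?thesis by (auto simp: Oq_hom_iff)
qed

lemma phi_add: "f \<in> fa_carrier n \<Longrightarrow> g \<in> fa_carrier n \<Longrightarrow> \<phi> (cl (\<lambda>w. f w + g w)) = \<phi> (cl f) \<oplus>\<^bsub>OQ\<^esub> \<phi> (cl g)"
  using ring_hom_O[OF phi_hom, of "cl f" "cl g"] by (simp add: cl_add cl_carrier)

lemma phi_mult: "f \<in> fa_carrier n \<Longrightarrow> g \<in> fa_carrier n \<Longrightarrow> \<phi> (cl (fa_mult f g)) = \<phi> (cl f) \<otimes>\<^bsub>OQ\<^esub> \<phi> (cl g)"
  using ring_hom_O[OF phi_hom, of "cl f" "cl g"] by (simp add: cl_mult cl_carrier)

lemma no_deg1:
  assumes f: "f \<in> fa_carrier n" "\<And>w. f w \<noteq> 0 \<Longrightarrow> length w \<noteq> 1"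
  shows "\<exists>g. g \<in> fa_carrier n \<and> \<phi> (cl f) = cl g \<and> (\<forall>w. length w = 1 \<longrightarrow> g w = 0)"
proof (rule fun_induct[where D="\<lambda>w. length w \<noteq> 1", OF f])
  show "\<exists>g. g \<in> fa_carrier n \<and> \<phi> (cl (\<lambda>_. 0)) = cl g \<and> (\<forall>w. length w = 1 \<longrightarrow> g w = 0)"
    by (rule exI[of _ "\<lambda>_. 0"]) (simp add: fa_zero_carrier cl_zero hom_zero_O[OF phi_hom])
  show "\<exists>g. g \<in> fa_carrier n \<and> \<phi> (cl (single w c)) = cl g \<and> (\<forall>w. length w = 1 \<longrightarrow> g w = 0)"
    if sw: "set w \<subseteq> {..<n}" and len: "length w \<noteq> 1" for w c
  proof -
    have "homog (single w c) (length w)" by (simp add: homog_def single_def)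
    then obtain g where g: "g \<in> fa_carrier n" "homog g (length w)" "\<phi> (cl (single w c)) = cl g"
      using phi_homog single_carrier[OF sw] by blast
    have "\<forall>u. length u = 1 \<longrightarrow> g u = 0" using g(2) len unfolding homog_def by metis
    thus ?thesis using g by blast
  qed
  show "\<exists>g. g \<in> fa_carrier n \<and> \<phi> (cl (\<lambda>w. f1 w + f2 w)) = cl g \<and> (\<forall>w. length w = 1 \<longrightarrow> g w = 0)"
    if c12: "f1 \<in> fa_carrier n" "f2 \<in> fa_carrier n"
      and h12: "\<exists>g. g \<in> fa_carrier n \<and> \<phi> (cl f1) = cl g \<and> (\<forall>w. length w = 1 \<longrightarrow> g w = 0)"
      "\<exists>g. g \<in> fa_carrier n \<and> \<phi> (cl f2) = cl g \<and> (\<forall>w. length w = 1 \<longrightarrow> g w = 0)" for f1 f2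
  proof -
    obtain g1 g2 where g: "g1 \<in> fa_carrier n" "\<phi> (cl f1) = cl g1" "\<forall>w. length w = 1 \<longrightarrow> g1 w = 0"
      "g2 \<in> fa_carrier n" "\<phi> (cl f2) = cl g2" "\<forall>w. length w = 1 \<longrightarrow> g2 w = 0"
      using h12 by blast
    show ?thesis
      by (rule exI[of _ "\<lambda>w. g1 w + g2 w"])
         (simp add: g phi_add[OF c12] cl_add fa_add_carrier)
  qed
qed

lemma deg1_surj:
  assumes l: "l < n"
  shows "\<exists>b. b \<in> fa_carrier n \<and> homog b 1 \<and> \<phi> (cl b) = cl (fa_var l)"
proof -
  have "cl (fa_var l) \<in> carrier OQ" by (simp add: cl_carrier fa_var_carrier[OF l])
  hence "cl (fa_var l) \<in> \<phi> ` carrier OQ" using phi_bij by (simp add: bij_betw_def)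
  then obtain B where B: "B \<in> carrier OQ" "\<phi> B = cl (fa_var l)" by auto
  then obtain f where f: "f \<in> fa_carrier n" "B = cl f" by (auto simp: Oq_carrier)
  define f1 where "f1 = (\<lambda>w. if length w = 1 then f w else 0)"
  define fr where "fr = (\<lambda>w. if length w = 1 then 0 else f w)"
  have f1c: "f1 \<in> fa_carrier n" and frc: "fr \<in> fa_carrier n"
    using f(1) unfolding f1_def fr_def fa_carrier_def
    by (auto intro: finite_subset[of _ "{w. f w \<noteq> 0}"])
  have fs: "f = (\<lambda>w. f1 w + fr w)" by (auto simp: f1_def fr_def)
  have h1: "homog f1 1" by (simp add: homog_def f1_def)
  obtain g1 where g1: "g1 \<in> fa_carrier n" "homog g1 1" "\<phi> (cl f1) = cl g1"
    using phi_homog[OF f1c h1] by blast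
  have "\<And>w. fr w \<noteq> 0 \<Longrightarrow> length w \<noteq> 1" by (auto simp: fr_def split: if_splits)
  from no_deg1[OF frc this]
  obtain gr where gr: "gr \<in> fa_carrier n" "\<phi> (cl fr) = cl gr" "\<forall>w. length w = 1 \<longrightarrow> gr w = 0"
    by blast
  have "cl (fa_var l) = \<phi> (cl f)" using B f by simp
  also have "\<phi> (cl f) = \<phi> (cl (\<lambda>w. f1 w + fr w))" by (subst fs) (rule refl)
  also have "\<dots> = \<phi> (cl f1) \<oplus>\<^bsub>OQ\<^esub> \<phi> (cl fr)" by (rule phi_add[OF f1c frc])
  also have "\<dots> = cl (\<lambda>w. g1 w + gr w)" using g1(3) gr(2) by (simp add: cl_add g1(1) gr(1))
  finally have "cl (fa_var l) = cl (\<lambda>w. g1 w + gr w)" .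
  hence "NM q {#a#} (fa_var l) = NM q {#a#} (\<lambda>w. g1 w + gr w)" for a
    by (intro cl_eq_NM fa_var_carrier l fa_add_carrier g1 gr)
  hence "fa_var l [a] = g1 [a]" for a using gr(3) by (simp add: NM_one)
  hence "g1 = fa_var l" by (intro homog1_eq[OF g1(2) homog1_var]) simp
  thus ?thesis using f1c h1 g1 by blast
qed

lemma normal:
  assumes i: "i < n" and l: "l < n" and g: "g \<in> fa_carrier n" "homog g 1" "\<phi> (cl (fa_var i)) = cl g"
  shows "\<exists>v. v \<in> fa_carrier n \<and> homog v 1 \<and> (\<forall>M. NM q M (fa_mult g (fa_var l)) = NM q M (fa_mult v g))"
proof -
  obtain b where b: "b \<in> fa_carrier n" "homog b 1" "\<phi> (cl b) = cl (fa_var l)"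
    using deg1_surj[OF l] by blast
  obtain v where v: "v \<in> fa_carrier n" "homog v 1" "\<phi> (cl (T i b)) = cl v"
    using phi_homog[OF T_carrier[OF b(1)] T_homog] by blast
  have "\<phi> (cl (fa_var i) \<otimes>\<^bsub>OQ\<^esub> cl b) = \<phi> (cl (T i b) \<otimes>\<^bsub>OQ\<^esub> cl (fa_var i))"
    using commute_cl[OF b(1,2) i] by simp
  hence "cl g \<otimes>\<^bsub>OQ\<^esub> cl (fa_var l) = cl v \<otimes>\<^bsub>OQ\<^esub> cl g"
    using phi_mult[OF fa_var_carrier[OF i] b(1)] phi_mult[OF T_carrier[OF b(1)] fa_var_carrier[OF i]]
      b v g by (simp add: cl_mult fa_var_carrier[OF i] T_carrier)
  hence "cl (fa_mult g (fa_var l)) = cl (fa_mult v g)"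
    by (simp add: cl_mult g(1) v(1) fa_var_carrier[OF l])
  hence "NM q M (fa_mult g (fa_var l)) = NM q M (fa_mult v g)" for M
    by (intro cl_eq_NM fa_mult_carrier g(1) v(1) fa_var_carrier[OF l])
  thus ?thesis using v by blast
qed

end


context aut begin

lemma hq_diag: "hq q a a = 1"
  by (simp add: hq_def)

lemma single_support:
  assumes z: "z \<in> fa_carrier n" "homog z 1"
    and nl: "\<And>l. l < n \<Longrightarrow> \<exists>v. v \<in> fa_carrier n \<and> homog v 1 \<and>
              (\<forall>M. NM q M (fa_mult z (fa_var l)) = NM q M (fa_mult v z))"
    and za: "z [a] \<noteq> 0" and zb: "z [b] \<noteq> 0"
  shows "a = b"
proof (rule ccontr)
  assume ab: "a \<noteq> b"
  have an: "a < n" and bn: "b < n" using z(1) za zb by (auto simp: fa_carrier_def)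
  have key: "q l a = q l b" if l: "l < n" for l
  proof -
    obtain v where v: "v \<in> fa_carrier n" "homog v 1"
      and E: "\<And>M. NM q M (fa_mult z (fa_var l)) = NM q M (fa_mult v z)"
      using nl[OF l] by blast
    have F: "fa_mult z (fa_var l) [x, y] = z [x] * (if y = l then 1 else 0)" for x y
      using mult_homog1[OF z(2) homog1_var] by (simp add: fa_var_def)
    have G: "fa_mult v z [x, y] = v [x] * z [y]" for x y
      using mult_homog1[OF v(2) z(2)] .
    have diag: "z [x] * (if x = l then 1 else 0) = v [x] * z [x]" for x
      using E[of "{#x, x#}"] by (simp add: NM_two_eq F G hq_diag)
    have two: "z [x] * (if y = l then 1 else 0) * hq q x y + z [y] * (if x = l then 1 else 0) * hq q y x
             = v [x] * z [y] * hq q x y + v [y] * z [x] * hq q y x" if "x \<noteq> y" for x y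
      using E[of "{#x, y#}"] that by (simp add: NM_two F G)
    have d0: "v [x] = 0" if "z [x] \<noteq> 0" "x \<noteq> l" for x using diag[of x] that by simp
    have d1: "v [l] = 1" if "z [l] \<noteq> 0" using diag[of l] that by simp
    show ?thesis
    proof (cases "l = a")
      case True
      hence vb: "v [b] = 0" using d0[OF zb] ab by auto
      have va: "v [a] = 1" using d1 za True by simp
      have "z [b] * hq q b a = z [b] * hq q a b"
        using two[OF ab] True ab va vb by simp
      hence "hq q b a = hq q a b" using zb by simp
      hence "q a b * hq q a b = 1 * hq q a b" using hq_swap[OF an bn] by simp
      hence "q a b = 1" using hq_nz[OF an bn] by (metis mult_right_cancel)
      thus ?thesis using True qdiag[OF an] by simp
    next
      case la: False
      show ?thesis
      proof (cases "l = b")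
        case True
        hence va: "v [a] = 0" using d0[OF za] ab by auto
        have vb: "v [b] = 1" using d1 zb True by simp
        have "z [a] * hq q a b = z [a] * hq q b a"
          using two[OF ab] True ab va vb by simp
        hence "hq q a b = hq q b a" using za by simp
        hence "q b a * hq q b a = 1 * hq q b a" using hq_swap[OF bn an] by simp
        hence "q b a = 1" using hq_nz[OF bn an] by (metis mult_right_cancel)
        thus ?thesis using True qdiag[OF bn] by simp
      next
        case lb: False
        have dl: "v [l] = q l x" if x: "x < n" "z [x] \<noteq> 0" "x \<noteq> l" for x
        proof -
          have vx: "v [x] = 0" using d0 x by simp
          have "z [x] * hq q x l = v [l] * z [x] * hq q l x"
            using two[OF x(3)] vx x(3) by simp
          hence "hq q x l = v [l] * hq q l x" using x(2) by (simp add: algebra_simps)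
          hence "q l x * hq q l x = v [l] * hq q l x" using hq_swap[OF l x(1)] by simp
          thus ?thesis using hq_nz[OF l x(1)] by (metis mult_right_cancel)
        qed
        show ?thesis using dl[OF an za la[symmetric]] dl[OF bn zb lb[symmetric]] by simp
      qed
    qed
  qed
  obtain l where l: "l < n" "q a l \<noteq> q b l" using rows[OF an bn ab] by blast
  have "q a l = inverse (q l a)" "q b l = inverse (q l b)"
    using qinv[OF l(1) an] qinv[OF l(1) bn] by (simp_all add: field_simps q_nz an bn l(1))
  thus False using key[OF l(1)] l(2) by simp
qed


lemma phi_inj: "inj_on \<phi> (carrier OQ)" using phi_bij by (simp add: bij_betw_def)

lemma phi_carrier: "A \<in> carrier OQ \<Longrightarrow> \<phi> A \<in> carrier OQ"
  using phi_hom by (auto simp: ring_hom_def)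

lemma image_single:
  assumes i: "i < n"
  shows "\<exists>a c. a < n \<and> c \<noteq> 0 \<and> \<phi> (cl (fa_var i)) = cl (single [a] c)"
proof -
  obtain g where g: "g \<in> fa_carrier n" "homog g 1" "\<phi> (cl (fa_var i)) = cl g"
    using phi_homog[OF fa_var_carrier[OF i] homog1_var] by blast
  have nl: "\<And>l. l < n \<Longrightarrow> \<exists>v. v \<in> fa_carrier n \<and> homog v 1 \<and>
              (\<forall>M. NM q M (fa_mult g (fa_var l)) = NM q M (fa_mult v g))"
    using normal[OF i _ g] by blast
  have "\<exists>a. g [a] \<noteq> 0"
  proof (rule ccontr)
    assume "\<not> (\<exists>a. g [a] \<noteq> 0)"
    hence "g = (\<lambda>_. 0)" using homog1_eq[OF g(2), of "\<lambda>_. 0"] by (simp add: homog_def)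
    hence "\<phi> (cl (fa_var i)) = \<phi> \<zero>\<^bsub>OQ\<^esub>" using g(3) by (simp add: cl_zero hom_zero_O[OF phi_hom])
    hence "cl (fa_var i) = \<zero>\<^bsub>OQ\<^esub>"
      using inj_onD[OF phi_inj] cl_carrier[OF fa_var_carrier[OF i]] ring.ring_simprules(2)[OF ring_O]
      by blast
    hence "cl (fa_var i) = cl (\<lambda>_. 0)" by (simp add: cl_zero)
    hence "NM q {#i#} (fa_var i) = NM q {#i#} (\<lambda>_. 0)"
      by (intro cl_eq_NM fa_var_carrier i fa_zero_carrier)
    thus False by (simp add: NM_one fa_var_def)
  qed
  then obtain a where a: "g [a] \<noteq> 0" by blast
  have an: "a < n" using g(1) a by (auto simp: fa_carrier_def)
  have "g = single [a] (g [a])"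
  proof (rule homog1_eq[OF g(2)])
    show "homog (single [a] (g [a])) 1" by (simp add: homog_def single_def)
    fix b show "g [b] = single [a] (g [a]) [b]"
      using single_support[OF g(1,2) nl a, of b] by (cases "g [b] = 0") (auto simp: single_def)
  qed
  thus ?thesis using g(3) an a by metis
qed


lemma phi_scalar_single:
  assumes a: "a < n" and i: "i < n" and e: "\<phi> (cl (fa_var i)) = cl (single [a] c)"
  shows "\<phi> (cl (single [i] d)) = cl (single [a] (d * c))"
proof -
  have "Oq_scalar n q d \<otimes>\<^bsub>OQ\<^esub> cl (fa_var i) = cl (\<lambda>w. d * fa_var i w)"
    by (rule scalar_mult[OF fa_var_carrier[OF i]])
  moreover have "(\<lambda>w. d * fa_var i w) = single [i] d" by (auto simp: fa_var_def single_def)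
  ultimately have "cl (single [i] d) = Oq_scalar n q d \<otimes>\<^bsub>OQ\<^esub> cl (fa_var i)" by simp
  hence "\<phi> (cl (single [i] d)) = Oq_scalar n q d \<otimes>\<^bsub>OQ\<^esub> cl (single [a] c)"
    using phi_lin[OF cl_carrier[OF fa_var_carrier[OF i]]] e by simp
  also have "\<dots> = cl (\<lambda>w. d * single [a] c w)"
    by (rule scalar_mult) (simp add: single_carrier a)
  also have "(\<lambda>w. d * single [a] c w) = single [a] (d * c)" by (auto simp: single_def)
  finally show ?thesis .
qed

lemma qpres_lemma:
  assumes i: "i < n" and j: "j < n"
    and agi: "\<alpha>i < n \<and> \<gamma>i \<noteq> 0 \<and> \<phi> (cl (fa_var i)) = cl (single [\<alpha>i] \<gamma>i)"
    and agj: "\<alpha>j < n \<and> \<gamma>j \<noteq> 0 \<and> \<phi> (cl (fa_var j)) = cl (single [\<alpha>j] \<gamma>j)"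
  shows "q \<alpha>i \<alpha>j = q i j"
proof -
  have "(\<lambda>w. single [j, i] 1 w - q i j * single [i, j] 1 w) \<in> I"
    using qrel_I[OF i j] by (simp add: qrel_eq)
  hence "cl (single [j, i] 1) = cl (\<lambda>w. q i j * single [i, j] 1 w)"
    by (intro cl_eqI single_carrier fa_smult_carrier) (use i j in auto)
  hence E0: "\<phi> (cl (single [j, i] 1)) = \<phi> (cl (\<lambda>w. q i j * single [i, j] 1 w))" by simp
  have vv: "single [x, y] 1 = fa_mult (fa_var x) (fa_var y)" for x y
    by (simp add: var_single fa_mult_single_single)
  have sij: "single [i, j] 1 \<in> fa_carrier n" using i j by (intro single_carrier) auto
  have L: "\<phi> (cl (single [j, i] 1)) = cl (single [\<alpha>j, \<alpha>i] (\<gamma>j * \<gamma>i))"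
    unfolding vv phi_mult[OF fa_var_carrier[OF j] fa_var_carrier[OF i]]
    using agi agj by (simp add: cl_mult single_carrier fa_mult_single_single)
  have "cl (\<lambda>w. q i j * single [i, j] 1 w) = Oq_scalar n q (q i j) \<otimes>\<^bsub>OQ\<^esub> cl (single [i, j] 1)"
    by (rule scalar_mult[OF sij, symmetric])
  hence "\<phi> (cl (\<lambda>w. q i j * single [i, j] 1 w)) = Oq_scalar n q (q i j) \<otimes>\<^bsub>OQ\<^esub> \<phi> (cl (single [i, j] 1))"
    using phi_lin[OF cl_carrier[OF sij]] by simp
  also have "\<phi> (cl (single [i, j] 1)) = cl (single [\<alpha>i, \<alpha>j] (\<gamma>i * \<gamma>j))"
    unfolding vv phi_mult[OF fa_var_carrier[OF i] fa_var_carrier[OF j]]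
    using agi agj by (simp add: cl_mult single_carrier fa_mult_single_single)
  also have "Oq_scalar n q (q i j) \<otimes>\<^bsub>OQ\<^esub> cl (single [\<alpha>i, \<alpha>j] (\<gamma>i * \<gamma>j))
      = cl (\<lambda>w. q i j * single [\<alpha>i, \<alpha>j] (\<gamma>i * \<gamma>j) w)"
    by (rule scalar_mult) (use agi agj in \<open>auto intro!: single_carrier\<close>)
  finally have "cl (single [\<alpha>j, \<alpha>i] (\<gamma>j * \<gamma>i)) = cl (\<lambda>w. q i j * single [\<alpha>i, \<alpha>j] (\<gamma>i * \<gamma>j) w)"
    using E0 L by simp
  hence "NM q {#\<alpha>i, \<alpha>j#} (single [\<alpha>j, \<alpha>i] (\<gamma>j * \<gamma>i))
       = NM q {#\<alpha>i, \<alpha>j#} (\<lambda>w. q i j * single [\<alpha>i, \<alpha>j] (\<gamma>i * \<gamma>j) w)"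
    by (intro cl_eq_NM single_carrier fa_smult_carrier) (use agi agj i j in auto)
  hence "\<gamma>j * \<gamma>i * hq q (\<alpha>j) (\<alpha>i) = q i j * (\<gamma>i * \<gamma>j * hq q (\<alpha>i) (\<alpha>j))"
    by (simp add: NM_smult NM_single add_mset_commute)
  hence "q (\<alpha>i) (\<alpha>j) * hq q (\<alpha>i) (\<alpha>j) = q i j * hq q (\<alpha>i) (\<alpha>j)"
    using hq_swap[of "\<alpha>i" "\<alpha>j"] agi agj by (simp add: field_simps)
  thus ?thesis using hq_nz[of "\<alpha>i" "\<alpha>j"] agi agj
    by (metis mult_right_cancel)
qed

lemma Aut_lin: "\<psi> \<in> Aut_gr_set n q \<Longrightarrow> A \<in> carrier OQ \<Longrightarrow>
   \<psi> (Oq_scalar n q c \<otimes>\<^bsub>OQ\<^esub> A) = Oq_scalar n q c \<otimes>\<^bsub>OQ\<^esub> \<psi> A"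
  unfolding Aut_gr_set_def by blast

lemma phi_is_Phi:
  "\<exists>l p. l \<in> {..<n} \<rightarrow>\<^sub>E (UNIV - {0}) \<and> p \<in> Pq n q \<and> Phi l p = \<phi>"
proof -
  have "\<forall>i. \<exists>x. i < n \<longrightarrow> fst x < n \<and> snd x \<noteq> 0 \<and> \<phi> (cl (fa_var i)) = cl (single [fst x] (snd x))"
    using image_single by fastforce
  from choice[OF this] obtain f where
    f: "\<forall>i. i < n \<longrightarrow> fst (f i) < n \<and> snd (f i) \<noteq> 0 \<and> \<phi> (cl (fa_var i)) = cl (single [fst (f i)] (snd (f i)))"
    by blast
  define \<alpha> where "\<alpha> = (\<lambda>i. fst (f i))"
  define \<gamma> where "\<gamma> = (\<lambda>i. snd (f i))"
  have ag: "\<And>i. i < n \<Longrightarrow> \<alpha> i < n \<and> \<gamma> i \<noteq> 0 \<and> \<phi> (cl (fa_var i)) = cl (single [\<alpha> i] (\<gamma> i))"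
    using f unfolding \<alpha>_def \<gamma>_def by blast
  have inj: "inj_on \<alpha> {..<n}"
  proof
    fix i j assume i: "i \<in> {..<n}" and j: "j \<in> {..<n}" and e: "\<alpha> i = \<alpha> j"
    have "\<phi> (cl (single [i] (\<gamma> j))) = \<phi> (cl (single [j] (\<gamma> i)))"
      using phi_scalar_single[of "\<alpha> i" i "\<gamma> i" "\<gamma> j"] phi_scalar_single[of "\<alpha> j" j "\<gamma> j" "\<gamma> i"] ag i j e
      by (simp add: mult.commute)
    moreover have "cl (single [i] (\<gamma> j)) \<in> carrier OQ" "cl (single [j] (\<gamma> i)) \<in> carrier OQ"
      using i j by (auto intro!: cl_carrier single_carrier)
    ultimately have "cl (single [i] (\<gamma> j)) = cl (single [j] (\<gamma> i))"
      using inj_onD[OF phi_inj] by blast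
    moreover have "\<gamma> j \<noteq> 0" "i < n" "j < n" using ag j i by auto
    ultimately show "i = j" using single_eq_cl[of i j "\<gamma> j" "\<gamma> i"] by blast
  qed
  define p where "p = (\<lambda>x. if x < n then \<alpha> x else x)"
  have pinj: "inj_on p {..<n}" using inj unfolding p_def inj_on_def by auto
  have pim: "p ` {..<n} \<subseteq> {..<n}" using ag by (auto simp: p_def)
  have "p ` {..<n} = {..<n}" by (rule endo_inj_surj[OF finite_lessThan pim pinj])
  hence bb: "bij_betw p {..<n} {..<n}" using pinj by (simp add: bij_betw_def)
  have out: "\<And>x. x \<notin> {..<n} \<Longrightarrow> p x = x" by (simp add: p_def)
  have pp: "p permutes {..<n}" by (rule bij_imp_permutes[OF bb out])
  have pi: "p i = \<alpha> i" if "i < n" for i using that by (simp add: p_def)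
  have qpres: "q (p i) (p j) = q i j" if i: "i < n" and j: "j < n" for i j
    using qpres_lemma[OF i j ag[OF i] ag[OF j]] pi i j by simp
  have pP: "p \<in> Pq n q" using pp qpres by (simp add: Pq_def)
  define l where "l = (\<lambda>a\<in>{..<n}. \<gamma> (inv_into UNIV p a))"
  have lC: "l \<in> {..<n} \<rightarrow>\<^sub>E (UNIV - {0})"
  proof -
    have "\<gamma> (inv_into UNIV p a) \<noteq> 0" if "a < n" for a
      using ag[of "inv_into UNIV p a"] permutes_in_image[OF permutes_inv[OF pp]] that by auto
    thus ?thesis by (auto simp: l_def)
  qed
  have lnz: "\<And>a. a < n \<Longrightarrow> l a \<noteq> 0" using lC by auto
  have "Phi l p = \<phi>"
  proof
    fix A show "Phi l p A = \<phi> A"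
    proof (cases "A \<in> carrier OQ")
      case True
      show ?thesis
      proof (rule determ[OF Phi_hom[OF pP] phi_hom _ phi_lin _ True])
        show "Phi l p (Oq_scalar n q c \<otimes>\<^bsub>OQ\<^esub> B) = Oq_scalar n q c \<otimes>\<^bsub>OQ\<^esub> Phi l p B"
          if "B \<in> carrier OQ" for c B
          using Aut_lin[OF Phi_Aut[OF pP lnz] that] .
        fix a assume a: "a < n"
        have "p a < n" using a permutes_in_image[OF pp] by simp
        thus "Phi l p (cl (fa_var a)) = \<phi> (cl (fa_var a))"
          using Phi_var[OF pP a, of l] ag[OF a] pi[OF a] permutes_inverses(2)[OF pp, of a]
          by (simp add: l_def)
      qed
    next
      case False
      thus ?thesis using phi_ext by (simp add: Phi_def extensional_def)
    qed
  qed
  thus ?thesis using lC pP by blast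
qed

end


lemma inv_into_permutes: "p permutes S \<Longrightarrow> i \<in> S \<Longrightarrow> inv_into S p i = inv_into UNIV p i"
proof -
  assume p: "p permutes S" and i: "i \<in> S"
  show ?thesis
    by (rule inv_into_f_eq[OF permutes_inj_on[OF p]])
       (use i permutes_in_image[OF permutes_inv[OF p]] permutes_inverses[OF p] in auto)
qed

theorem corollary4p6:
  fixes n :: nat and q :: "nat \<Rightarrow> nat \<Rightarrow> 'k::field"
  assumes "n \<ge> 1"
    and "\<And>i j. i < n \<Longrightarrow> j < n \<Longrightarrow> q i j * q j i = 1"
    and "\<And>i. i < n \<Longrightarrow> q i i = 1"
    and "\<And>i j. i < n \<Longrightarrow> j < n \<Longrightarrow> i \<noteq> j \<Longrightarrow> (\<exists>l<n. q i l \<noteq> q j l)"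
  shows "Aut_gr n q \<cong> semidirect n q"
proof -
  interpret qa n q using assms(2,3) by unfold_locales auto
  define Psi where "Psi = (\<lambda>x :: (nat \<Rightarrow> 'k) \<times> (nat \<Rightarrow> nat). Phi (fst x) (snd x))"
  have SDc: "carrier (semidirect n q) = ({..<n} \<rightarrow>\<^sub>E (UNIV - {0})) \<times> Pq n q"
    by (simp add: semidirect_def)
  have SDm: "x \<otimes>\<^bsub>semidirect n q\<^esub> y =
     ((\<lambda>i\<in>{..<n}. fst x i * perm_act n (snd x) (fst y) i), snd x \<circ> snd y)" for x y
    by (cases x; cases y) (simp add: semidirect_def)
  have AGc: "carrier (Aut_gr n q) = Aut_gr_set n q" by (simp add: Aut_gr_def)
  have AGm: "\<phi> \<otimes>\<^bsub>Aut_gr n q\<^esub> \<psi> = compose (carrier OQ) \<phi> \<psi>" for \<phi> \<psi>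
    by (simp add: Aut_gr_def)
  have sdfst: "fst x \<in> {..<n} \<rightarrow>\<^sub>E (UNIV - {0})" and sdsnd: "snd x \<in> Pq n q"
    if "x \<in> carrier (semidirect n q)" for x
    using that unfolding SDc by (simp_all add: mem_Times_iff)
  have lnz: "\<And>a. a < n \<Longrightarrow> fst x a \<noteq> 0" if "x \<in> carrier (semidirect n q)" for x
  proof -
    fix a assume "a < n"
    thus "fst x a \<noteq> 0" using PiE_mem[OF sdfst[OF that], of a] by simp
  qed
  have mapsto: "Psi x \<in> Aut_gr_set n q" if "x \<in> carrier (semidirect n q)" for x
    unfolding Psi_def by (rule Phi_Aut[OF sdsnd[OF that] lnz[OF that]])
  have inj: "inj_on Psi (carrier (semidirect n q))"
  proof
    fix x y assume x: "x \<in> carrier (semidirect n q)" and y: "y \<in> carrier (semidirect n q)"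
      and e: "Psi x = Psi y"
    have px: "snd x \<in> Pq n q" and py: "snd y \<in> Pq n q" using sdsnd x y by auto
    have s: "snd x = snd y" using Phi_inj(1)[OF px py lnz[OF x]] e by (simp add: Psi_def)
    have "fst x a = fst y a" for a
    proof (cases "a < n")
      case True thus ?thesis using Phi_inj(2)[OF px py lnz[OF x]] e by (simp add: Psi_def)
    next
      case False
      thus ?thesis using PiE_arb[OF sdfst[OF x], of a] PiE_arb[OF sdfst[OF y], of a] by simp
    qed
    hence "fst x = fst y" by (rule ext)
    thus "x = y" using s by (simp add: prod_eq_iff)
  qed
  have surj: "Psi ` carrier (semidirect n q) = Aut_gr_set n q"
  proof
    show "Psi ` carrier (semidirect n q) \<subseteq> Aut_gr_set n q" using mapsto by blast
    show "Aut_gr_set n q \<subseteq> Psi ` carrier (semidirect n q)"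
    proof
      fix \<phi> assume phi: "\<phi> \<in> Aut_gr_set n q"
      have "aut n q \<phi>"
      proof (intro aut.intro aut_axioms.intro)
        show "qa n q" by (rule qa_axioms)
        show "\<phi> \<in> Aut_gr_set n q" by (rule phi)
      qed (rule assms(4))
      then obtain l p where "l \<in> {..<n} \<rightarrow>\<^sub>E (UNIV - {0})" "p \<in> Pq n q" "Phi l p = \<phi>"
        using aut.phi_is_Phi by blast
      thus "\<phi> \<in> Psi ` carrier (semidirect n q)"
        by (intro image_eqI[of _ _ "(l, p)"]) (simp_all add: Psi_def SDc)
    qed
  qed
  have closed: "x \<otimes>\<^bsub>semidirect n q\<^esub> y \<in> carrier (semidirect n q)"
    if x: "x \<in> carrier (semidirect n q)" and y: "y \<in> carrier (semidirect n q)" for x y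
  proof -
    have px: "snd x \<in> Pq n q" and py: "snd y \<in> Pq n q" using sdsnd x y by auto
    have pp: "snd x permutes {..<n}" using px by (simp add: Pq_def)
    have nz: "fst x i * perm_act n (snd x) (fst y) i \<noteq> 0" if i: "i < n" for i
    proof -
      have "inv_into UNIV (snd x) i \<in> {..<n}"
        using i permutes_in_image[OF permutes_inv[OF pp], of i] by simp
      hence "inv_into {..<n} (snd x) i < n"
        using inv_into_permutes[OF pp, of i] i by simp
      hence "fst y (inv_into {..<n} (snd x) i) \<noteq> 0" by (rule lnz[OF y])
      thus ?thesis using lnz[OF x i] i by (simp add: perm_act_def)
    qed
    have m1: "(\<lambda>i\<in>{..<n}. fst x i * perm_act n (snd x) (fst y) i) \<in> {..<n} \<rightarrow>\<^sub>E (UNIV - {0})"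
      using nz by (simp add: PiE_iff)
    show ?thesis unfolding SDm SDc using m1 Pq_comp[OF px py] by (simp add: mem_Times_iff)
  qed
  have hom: "Psi (x \<otimes>\<^bsub>semidirect n q\<^esub> y) = Psi x \<otimes>\<^bsub>Aut_gr n q\<^esub> Psi y"
    if x: "x \<in> carrier (semidirect n q)" and y: "y \<in> carrier (semidirect n q)" for x y
  proof -
    have px: "snd x \<in> Pq n q" and py: "snd y \<in> Pq n q" using sdsnd x y by auto
    have pp: "snd x permutes {..<n}" using px by (simp add: Pq_def)
    have "Psi x \<otimes>\<^bsub>Aut_gr n q\<^esub> Psi y = Phi (\<lambda>a. fst x a * fst y (inv_into UNIV (snd x) a)) (snd x \<circ> snd y)"
      by (simp add: AGm Psi_def Phi_comp[OF px py])
    also have "\<dots> = Phi (\<lambda>i\<in>{..<n}. fst x i * perm_act n (snd x) (fst y) i) (snd x \<circ> snd y)"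
      by (rule Phi_cong[OF Pq_comp[OF px py]]) (simp add: perm_act_def inv_into_permutes[OF pp])
    finally show ?thesis by (simp add: SDm Psi_def)
  qed
  define h where "h = inv_into (carrier (semidirect n q)) Psi"
  have bij: "bij_betw Psi (carrier (semidirect n q)) (Aut_gr_set n q)"
    using inj surj by (simp add: bij_betw_def)
  have hbij: "bij_betw h (carrier (Aut_gr n q)) (carrier (semidirect n q))"
    unfolding h_def AGc by (rule bij_betw_inv_into[OF bij])
  have hc: "h a \<in> carrier (semidirect n q)" if "a \<in> carrier (Aut_gr n q)" for a
    using hbij that bij_betwE by blast
  have hr: "Psi (h a) = a" if "a \<in> carrier (Aut_gr n q)" for a
    unfolding h_def using that surj AGc by (simp add: f_inv_into_f)
  have "h \<in> hom (Aut_gr n q) (semidirect n q)"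
  proof (rule homI)
    show "h a \<in> carrier (semidirect n q)" if "a \<in> carrier (Aut_gr n q)" for a using hc[OF that] .
    show "h (a \<otimes>\<^bsub>Aut_gr n q\<^esub> b) = h a \<otimes>\<^bsub>semidirect n q\<^esub> h b"
      if a: "a \<in> carrier (Aut_gr n q)" and b: "b \<in> carrier (Aut_gr n q)" for a b
    proof -
      have "Psi (h a \<otimes>\<^bsub>semidirect n q\<^esub> h b) = a \<otimes>\<^bsub>Aut_gr n q\<^esub> b"
        using hom[OF hc[OF a] hc[OF b]] hr[OF a] hr[OF b] by simp
      hence "h (a \<otimes>\<^bsub>Aut_gr n q\<^esub> b) = h (Psi (h a \<otimes>\<^bsub>semidirect n q\<^esub> h b))" by simp
      also have "\<dots> = h a \<otimes>\<^bsub>semidirect n q\<^esub> h b"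
        using closed[OF hc[OF a] hc[OF b]] unfolding h_def by (rule inv_into_f_f[OF inj])
      finally show ?thesis .
    qed
  qed
  thus ?thesis using hbij by (intro is_isoI isoI)
qed


end
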